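(* Let $q\in\mathbb{C}\setminus\{0\}$, $n\in\mathbb{N}$, $r\in(0,+\infty]$. (i) There exists a surjective continuous homomorphism $\pi:\mathcal{F}(\mathbb{B}_r^n)\to\mathcal{O}_q(\mathbb{B}_r^n)$ with $\zeta_i\mapsto x_i$ ($i=1,\dots,n$). (ii) $\operatorname{Ker}\pi$ equals the closed two-sided ideal of $\mathcal{F}(\mathbb{B}_r^n)$ generated by $\zeta_i\zeta_j-q\zeta_j\zeta_i$ ($1\le i<j\le n$). (iii) $\operatorname{Ker}\pi$ is a complemented subspace of $\mathcal{F}(\mathbb{B}_r^n)$. (iv) Under the identification $\mathcal{O}_q(\mathbb{B}_r^n)\cong\mathcal{F}(\mathbb{B}_r^n)/\operatorname{Ker}\pi$, for each $\rho\in(0,r)$ the norm $\|\cdot\|_{\mathbb{B},\rho}$ equals the quotient norm of $\|\cdot\|^\circ_\rho$.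
   Context: $W_n$: finite words $\alpha=(\alpha_1,\dots,\alpha_d)$ over $\{1,\dots,n\}$, $|\alpha|=d$; $p(\alpha)=(p_1(\alpha),\dots,p_n(\alpha))\in\mathbb{Z}_+^n$ with $p_i(\alpha)=\#\{j:\alpha_j=i\}$. $\mathcal{F}(\mathbb{B}_r^n)$ is the algebra of series $f=\sum_{\alpha\in W_n}c_\alpha\zeta_\alpha$ with $\|f\|^\bullet_\rho=\sum_{d\ge0}(\sum_{|\alpha|=d}|c_\alpha|^2)^{1/2}\rho^d<\infty$ for all $\rho\in(0,r)$, multiplication by concatenation, topology given by $\|\cdot\|^\bullet_\rho$; equivalently by the norms $\|f\|^\circ_\rho=\sum_{k\in\mathbb{Z}_+^n}(\sum_{\alpha\in p^{-1}(k)}|c_\alpha|^2)^{1/2}\rho^{|k|}$. $\mathcal{O}_q^{\mathrm{reg}}(\mathbb{C}^n)$: algebra generated by $x_1,\dots,x_n$ with $x_ix_j=qx_jx_i$ ($i<j$), basis $x^k$. $u_q(k)=|q|^{\sum_{i<j}k_ik_j}$, $[m]_t=1+\dots+t^{m-1}$, $[m]_t!=[1]_t\cdots[m]_t$, $[0]_t!=1$, $[k]_t!=\prod[k_i]_t!$, $|k|=\sum k_i$; $\|\sum c_kx^k\|_{\mathbb{B},\rho}=\sum|c_k|([k]_{|q|^2}!/[|k|]_{|q|^2}!)^{1/2}u_q(k)\rho^{|k|}$; $\mathcal{O}_q(\mathbb{B}_r^n)$ is the completion of $\mathcal{O}_q^{\mathrm{reg}}(\mathbb{C}^n)$ with respect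 to these norms, $\rho\in(0,r)$. *)

theory Defs
  imports "HOL-Analysis.Analysis"
begin

text \<open>Words over {1..n} are lists; an element of F(B_r^n) is its coefficient
 function c : words -> complex (the series sum c_alpha zeta_alpha).\<close>

definition words :: "nat \<Rightarrow> nat list set" where
  "words n = {\<alpha>. set \<alpha> \<subseteq> {1..n}}"

definition wblock :: "nat \<Rightarrow> (nat list \<Rightarrow> complex) \<Rightarrow> nat \<Rightarrow> real" where
  "wblock n c d = sqrt (\<Sum>\<alpha>\<in>{\<alpha>\<in>words n. length \<alpha> = d}. (cmod (c \<alpha>))^2)"

definition normF_bullet :: "nat \<Rightarrow> (nat list \<Rightarrow> complex) \<Rightarrow> real \<Rightarrow> real" where
  "normF_bullet n c \<rho> = (\<Sum>\<^sub>\<infinity>d\<in>(UNIV::nat set). wblock n c d * \<rho> ^ d)"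

definition Fspace :: "nat \<Rightarrow> ereal \<Rightarrow> (nat list \<Rightarrow> complex) set" where
  "Fspace n r = {c. (\<forall>\<alpha>. \<alpha> \<notin> words n \<longrightarrow> c \<alpha> = 0) \<and>
      (\<forall>\<rho>. 0 < \<rho> \<and> ereal \<rho> < r \<longrightarrow> (\<lambda>d. wblock n c d * \<rho> ^ d) summable_on (UNIV::nat set))}"

text \<open>Multi-indices k in Z_+^n are functions nat => nat supported in {1..n}.\<close>

definition mindex :: "nat \<Rightarrow> (nat \<Rightarrow> nat) set" where
  "mindex n = {k. \<forall>i. i \<notin> {1..n} \<longrightarrow> k i = 0}"

definition mabs :: "nat \<Rightarrow> (nat \<Rightarrow> nat) \<Rightarrow> nat" where
  "mabs n k = (\<Sum>i\<in>{1..n}. k i)"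

definition pvec :: "nat list \<Rightarrow> nat \<Rightarrow> nat" where
  "pvec \<alpha> = (\<lambda>i. count_list \<alpha> i)"

definition normF_circ :: "nat \<Rightarrow> (nat list \<Rightarrow> complex) \<Rightarrow> real \<Rightarrow> real" where
  "normF_circ n c \<rho> = (\<Sum>\<^sub>\<infinity>k\<in>mindex n.
      sqrt (\<Sum>\<alpha>\<in>{\<alpha>\<in>words n. pvec \<alpha> = k}. (cmod (c \<alpha>))^2) * \<rho> ^ (mabs n k))"

definition Fmult :: "(nat list \<Rightarrow> complex) \<Rightarrow> (nat list \<Rightarrow> complex) \<Rightarrow> nat list \<Rightarrow> complex" where
  "Fmult f g w = (\<Sum>j\<le>length w. f (take j w) * g (drop j w))"

definition Fone :: "nat list \<Rightarrow> complex" where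
  "Fone w = (if w = [] then 1 else 0)"

definition zeta :: "nat \<Rightarrow> nat list \<Rightarrow> complex" where
  "zeta i w = (if w = [i] then 1 else 0)"

definition qint :: "real \<Rightarrow> nat \<Rightarrow> real" where
  "qint t m = (\<Sum>j<m. t ^ j)"

definition qfact :: "real \<Rightarrow> nat \<Rightarrow> real" where
  "qfact t m = (\<Prod>j\<in>{1..m}. qint t j)"

definition qfact_multi :: "nat \<Rightarrow> real \<Rightarrow> (nat \<Rightarrow> nat) \<Rightarrow> real" where
  "qfact_multi n t k = (\<Prod>i\<in>{1..n}. qfact t (k i))"

definition uq :: "nat \<Rightarrow> complex \<Rightarrow> (nat \<Rightarrow> nat) \<Rightarrow> real" where
  "uq n q k = cmod q ^ (\<Sum>i\<in>{1..n}. \<Sum>j\<in>{i<..n}. k i * k j)"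

definition Bterm :: "nat \<Rightarrow> complex \<Rightarrow> (nat \<Rightarrow> nat) \<Rightarrow> real" where
  "Bterm n q k = sqrt (qfact_multi n ((cmod q)^2) k / qfact ((cmod q)^2) (mabs n k)) * uq n q k"

definition normB :: "nat \<Rightarrow> complex \<Rightarrow> ((nat \<Rightarrow> nat) \<Rightarrow> complex) \<Rightarrow> real \<Rightarrow> real" where
  "normB n q c \<rho> = (\<Sum>\<^sub>\<infinity>k\<in>mindex n. cmod (c k) * Bterm n q k * \<rho> ^ (mabs n k))"

text \<open>The completion of O_q^reg(C^n) w.r.t. the norms normB, realised as the space of
 coefficient families (c_k) with all norms finite.\<close>

definition Oq :: "nat \<Rightarrow> complex \<Rightarrow> ereal \<Rightarrow> ((nat \<Rightarrow> nat) \<Rightarrow> complex) set" where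
  "Oq n q r = {c. (\<forall>k. k \<notin> mindex n \<longrightarrow> c k = 0) \<and>
      (\<forall>\<rho>. 0 < \<rho> \<and> ereal \<rho> < r \<longrightarrow>
          (\<lambda>k. cmod (c k) * Bterm n q k * \<rho> ^ (mabs n k)) summable_on mindex n)}"

text \<open>Product: x^k x^l = q^(- sum_{i>j} k_i l_j) x^(k+l).\<close>

definition Oqmult :: "nat \<Rightarrow> complex \<Rightarrow> ((nat \<Rightarrow> nat) \<Rightarrow> complex) \<Rightarrow> ((nat \<Rightarrow> nat) \<Rightarrow> complex)
     \<Rightarrow> (nat \<Rightarrow> nat) \<Rightarrow> complex" where
  "Oqmult n q a b m = (\<Sum>k\<in>{k. \<forall>i. k i \<le> m i}.
      (inverse q) ^ (\<Sum>i\<in>{1..n}. \<Sum>j\<in>{1..<i}. k i * (m j - k j)) * a k * b (\<lambda>i. m i - k i))"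

definition Oone :: "(nat \<Rightarrow> nat) \<Rightarrow> complex" where
  "Oone k = (if k = (\<lambda>_. 0) then 1 else 0)"

definition xgen :: "nat \<Rightarrow> (nat \<Rightarrow> nat) \<Rightarrow> complex" where
  "xgen i k = (if k = (\<lambda>j. if j = i then 1 else 0) then 1 else 0)"

definition lin_on :: "('a \<Rightarrow> complex) set \<Rightarrow> (('a \<Rightarrow> complex) \<Rightarrow> ('b \<Rightarrow> complex)) \<Rightarrow> bool" where
  "lin_on S T \<longleftrightarrow> (\<forall>f\<in>S. \<forall>g\<in>S. T (\<lambda>x. f x + g x) = (\<lambda>y. T f y + T g y)) \<and>
                   (\<forall>f\<in>S. \<forall>c. T (\<lambda>x. c * f x) = (\<lambda>y. c * T f y))"

definition cont_FO :: "nat \<Rightarrow> complex \<Rightarrow> ereal \<Rightarrow> ((nat list \<Rightarrow> complex) \<Rightarrow> ((nat \<Rightarrow> nat) \<Rightarrow> complex)) \<Rightarrow> bool" where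
  "cont_FO n q r T \<longleftrightarrow> (\<forall>\<rho>. 0 < \<rho> \<and> ereal \<rho> < r \<longrightarrow>
     (\<exists>\<rho>' C. 0 < \<rho>' \<and> ereal \<rho>' < r \<and> (\<forall>f\<in>Fspace n r. normB n q (T f) \<rho> \<le> C * normF_bullet n f \<rho>')))"

definition cont_FF :: "nat \<Rightarrow> ereal \<Rightarrow> ((nat list \<Rightarrow> complex) \<Rightarrow> (nat list \<Rightarrow> complex)) \<Rightarrow> bool" where
  "cont_FF n r T \<longleftrightarrow> (\<forall>\<rho>. 0 < \<rho> \<and> ereal \<rho> < r \<longrightarrow>
     (\<exists>\<rho>' C. 0 < \<rho>' \<and> ereal \<rho>' < r \<and> (\<forall>f\<in>Fspace n r. normF_bullet n (T f) \<rho> \<le> C * normF_bullet n f \<rho>')))"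

definition two_sided_ideal :: "nat \<Rightarrow> ereal \<Rightarrow> (nat list \<Rightarrow> complex) set \<Rightarrow> bool" where
  "two_sided_ideal n r I \<longleftrightarrow> I \<subseteq> Fspace n r \<and> (\<lambda>_. 0) \<in> I \<and>
     (\<forall>f\<in>I. \<forall>g\<in>I. (\<lambda>w. f w + g w) \<in> I) \<and> (\<forall>f\<in>I. \<forall>c. (\<lambda>w. c * f w) \<in> I) \<and>
     (\<forall>a\<in>Fspace n r. \<forall>f\<in>I. Fmult a f \<in> I \<and> Fmult f a \<in> I)"

definition ideal_gen :: "nat \<Rightarrow> ereal \<Rightarrow> (nat list \<Rightarrow> complex) set \<Rightarrow> (nat list \<Rightarrow> complex) set" where
  "ideal_gen n r G = {f \<in> Fspace n r. \<forall>I. two_sided_ideal n r I \<and> G \<subseteq> I \<longrightarrow> f \<in> I}"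

text \<open>Closure in the topology of F(B_r^n) (seminorms normF_bullet, increasing in rho).\<close>

definition Fclosure :: "nat \<Rightarrow> ereal \<Rightarrow> (nat list \<Rightarrow> complex) set \<Rightarrow> (nat list \<Rightarrow> complex) set" where
  "Fclosure n r S = {f \<in> Fspace n r. \<forall>\<rho>. 0 < \<rho> \<and> ereal \<rho> < r \<longrightarrow>
      (\<forall>\<epsilon>>0. \<exists>g\<in>S. normF_bullet n (\<lambda>w. f w - g w) \<rho> < \<epsilon>)}"

definition qcomm :: "complex \<Rightarrow> nat \<Rightarrow> nat \<Rightarrow> nat list \<Rightarrow> complex" where
  "qcomm q i j = (\<lambda>w. Fmult (zeta i) (zeta j) w - q * Fmult (zeta j) (zeta i) w)"

end

theory Submission
  imports Defs
begin

definition wd :: "nat list \<Rightarrow> nat list \<Rightarrow> complex" where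
  "wd u = (\<lambda>w. if w = u then 1 else 0)"

fun ninv :: "nat list \<Rightarrow> nat" where
  "ninv [] = 0"
| "ninv (x # xs) = length (filter (\<lambda>y. y < x) xs) + ninv xs"

definition wt :: "complex \<Rightarrow> nat list \<Rightarrow> complex" where
  "wt q \<alpha> = (inverse q) ^ ninv \<alpha>"

definition Aset :: "nat \<Rightarrow> (nat \<Rightarrow> nat) \<Rightarrow> nat list set" where
  "Aset n k = {\<alpha> \<in> words n. pvec \<alpha> = k}"

definition piF :: "nat \<Rightarrow> complex \<Rightarrow> (nat list \<Rightarrow> complex) \<Rightarrow> (nat \<Rightarrow> nat) \<Rightarrow> complex" where
  "piF n q f = (\<lambda>k. \<Sum>\<alpha>\<in>Aset n k. f \<alpha> * wt q \<alpha>)"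

lemma words_Cons[simp]: "(x # xs) \<in> words n \<longleftrightarrow> x \<in> {1..n} \<and> xs \<in> words n"
  by (auto simp: words_def)
lemma words_Nil[simp]: "[] \<in> words n"
  by (auto simp: words_def)
lemma words_append[simp]: "(xs @ ys) \<in> words n \<longleftrightarrow> xs \<in> words n \<and> ys \<in> words n"
  by (auto simp: words_def)

lemma finite_words_len: "finite {\<alpha> \<in> words n. length \<alpha> = d}"
  using finite_lists_length_eq[of "{1..n}" d] by (simp add: words_def)

lemma finite_words_le: "finite {\<alpha> \<in> words n. length \<alpha> \<le> d}"
  using finite_lists_length_le[of "{1..n}" d] by (simp add: words_def)

lemma pvec_append: "pvec (xs @ ys) = (\<lambda>i. pvec xs i + pvec ys i)"
  by (simp add: pvec_def)

lemma pvec_mindex: "\<alpha> \<in> words n \<Longrightarrow> pvec \<alpha> \<in> mindex n"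
  unfolding pvec_def mindex_def words_def by (auto simp: count_list_0_iff)

lemma length_pvec: "\<alpha> \<in> words n \<Longrightarrow> mabs n (pvec \<alpha>) = length \<alpha>"
  unfolding mabs_def pvec_def words_def by (rule sum_count_set) auto

lemma Aset_sub: "Aset n k \<subseteq> {\<alpha> \<in> words n. length \<alpha> = mabs n k}"
  using length_pvec by (auto simp: Aset_def)

lemma finite_Aset[simp]: "finite (Aset n k)"
  using Aset_sub finite_words_len finite_subset by blast

lemma Aset_empty: "k \<notin> mindex n \<Longrightarrow> Aset n k = {}"
  using pvec_mindex by (auto simp: Aset_def)

lemma Fmult_wd: "Fmult (wd u) (wd v) = wd (u @ v)"
proof
  fix w
  show "Fmult (wd u) (wd v) w = wd (u @ v) w"
  proof (cases "w = u @ v")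
    case True
    have "Fmult (wd u) (wd v) w = (\<Sum>j\<le>length w. if j = length u then 1 else 0)"
      unfolding Fmult_def wd_def
    proof (rule sum.cong)
      fix x assume x: "x \<in> {..length w}"
      have 1: "x = length u" if "take x w = u"
      proof -
        have "length (take x w) = length u" using that by simp
        then show ?thesis using x by simp
      qed
      have 2: "take x w = u \<and> drop x w = v" if "x = length u"
        using True that by simp
      show "(if take x w = u then 1 else 0) * (if drop x w = v then 1 else 0) = (if x = length u then 1 else (0::complex))"
        using 1 2 by (cases "x = length u") auto
    qed simp
    also have "\<dots> = 1" using True by simp
    finally show ?thesis using True by (simp add: wd_def)
  next
    case False
    have "Fmult (wd u) (wd v) w = (\<Sum>j\<le>length w. 0)"
      unfolding Fmult_def wd_def
    proof (rule sum.cong)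
      fix x assume "x \<in> {..length w}"
      have "\<not> (take x w = u \<and> drop x w = v)"
        using False append_take_drop_id[of x w] by metis
      then show "(if take x w = u then 1 else 0) * (if drop x w = v then 1 else 0) = (0::complex)"
        by auto
    qed simp
    then show ?thesis using False by (simp add: wd_def)
  qed
qed

lemma Fmult_right_lin: "Fmult f (\<lambda>w. g w - c * h w) = (\<lambda>w. Fmult f g w - c * Fmult f h w)"
  unfolding Fmult_def by (auto simp: algebra_simps sum_subtractf sum_distrib_left)

lemma Fmult_left_lin: "Fmult (\<lambda>w. g w - c * h w) f = (\<lambda>w. Fmult g f w - c * Fmult h f w)"
  unfolding Fmult_def by (auto simp: algebra_simps sum_subtractf sum_distrib_left)

lemma zeta_wd: "zeta i = wd [i]" by (auto simp: zeta_def wd_def)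
lemma Fone_wd: "Fone = wd []" by (auto simp: Fone_def wd_def)

lemma qcomm_wd: "qcomm q i j = (\<lambda>w. wd [i,j] w - q * wd [j,i] w)"
  unfolding qcomm_def zeta_wd Fmult_wd by simp

lemma wblock_zero:
  assumes "\<And>\<alpha>. length \<alpha> = d \<Longrightarrow> f \<alpha> = 0"
  shows "wblock n f d = 0"
  unfolding wblock_def using assms by (simp)

lemma fin_Fspace:
  assumes "\<And>\<alpha>. \<alpha> \<notin> words n \<Longrightarrow> f \<alpha> = 0" "\<And>\<alpha>. length \<alpha> > N \<Longrightarrow> f \<alpha> = 0"
  shows "f \<in> Fspace n r"
  unfolding Fspace_def
proof (intro CollectI conjI allI impI)
  fix \<rho> :: real
  assume rho: "0 < \<rho> \<and> ereal \<rho> < r"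
  have "summable (\<lambda>d. wblock n f d * \<rho> ^ d)"
    by (rule summable_finite[of "{..N}"]) (auto simp: wblock_zero assms(2))
  then show "(\<lambda>d. wblock n f d * \<rho> ^ d) summable_on UNIV"
    using rho by (subst summable_on_UNIV_nonneg_real_iff) (auto simp: wblock_def intro!: mult_nonneg_nonneg sum_nonneg)
qed (use assms(1) in auto)

lemma wd_Fspace: "u \<in> words n \<Longrightarrow> wd u \<in> Fspace n r"
  by (rule fin_Fspace[of _ _ "length u"]) (auto simp: wd_def)

locale ideal_ctx =
  fixes n r q I
  assumes tsi: "two_sided_ideal n r I"
    and gens: "\<And>i j. 1 \<le> i \<Longrightarrow> i < j \<Longrightarrow> j \<le> n \<Longrightarrow> qcomm q i j \<in> I"
    and qnz: "q \<noteq> 0"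
begin

lemma I_add: "f \<in> I \<Longrightarrow> g \<in> I \<Longrightarrow> (\<lambda>w. f w + g w) \<in> I"
  using tsi unfolding two_sided_ideal_def by blast
lemma I_smult: "f \<in> I \<Longrightarrow> (\<lambda>w. c * f w) \<in> I"
  using tsi unfolding two_sided_ideal_def by blast
lemma I_zero: "(\<lambda>_. 0) \<in> I"
  using tsi unfolding two_sided_ideal_def by blast
lemma I_multL: "a \<in> Fspace n r \<Longrightarrow> f \<in> I \<Longrightarrow> Fmult a f \<in> I"
  using tsi unfolding two_sided_ideal_def by blast
lemma I_multR: "a \<in> Fspace n r \<Longrightarrow> f \<in> I \<Longrightarrow> Fmult f a \<in> I"
  using tsi unfolding two_sided_ideal_def by blast

lemma I_diff: "f \<in> I \<Longrightarrow> g \<in> I \<Longrightarrow> (\<lambda>w. f w - c * g w) \<in> I"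
  using I_add[of f "\<lambda>w. (- c) * g w"] I_smult[of g "-c"] by simp

lemma I_sum: "finite A \<Longrightarrow> (\<And>a. a \<in> A \<Longrightarrow> g a \<in> I) \<Longrightarrow> (\<lambda>w. \<Sum>a\<in>A. g a w) \<in> I"
proof (induction A rule: finite_induct)
  case empty then show ?case using I_zero by simp
next
  case (insert x F)
  then show ?case using I_add[of "g x" "\<lambda>w. \<Sum>a\<in>F. g a w"] by simp
qed

lemma gen_in:
  assumes "1 \<le> i" "i < j" "j \<le> n" "u \<in> words n" "v \<in> words n"
  shows "(\<lambda>w. wd (u @ [i,j] @ v) w - q * wd (u @ [j,i] @ v) w) \<in> I"
proof -
  have "Fmult (wd u) (qcomm q i j) \<in> I" using I_multL wd_Fspace assms gens by blast
  then have "(\<lambda>w. wd (u @ [i,j]) w - q * wd (u @ [j,i]) w) \<in> I"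
    by (simp add: qcomm_wd Fmult_right_lin Fmult_wd)
  then have "Fmult (\<lambda>w. wd (u @ [i,j]) w - q * wd (u @ [j,i]) w) (wd v) \<in> I"
    using I_multR wd_Fspace assms by blast
  then show ?thesis by (simp add: Fmult_left_lin Fmult_wd)
qed

lemma swap_in:
  assumes "y < x" "1 \<le> y" "x \<le> n" "u \<in> words n" "v \<in> words n"
  shows "(\<lambda>w. wd (u @ [x,y] @ v) w - inverse q * wd (u @ [y,x] @ v) w) \<in> I"
proof -
  have "(\<lambda>w. (- inverse q) * (wd (u @ [y,x] @ v) w - q * wd (u @ [x,y] @ v) w)) \<in> I"
    using I_smult gen_in assms by blast
  also have "(\<lambda>w. (- inverse q) * (wd (u @ [y,x] @ v) w - q * wd (u @ [x,y] @ v) w)) =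
     (\<lambda>w. wd (u @ [x,y] @ v) w - inverse q * wd (u @ [y,x] @ v) w)"
    using qnz by (auto simp: field_simps)
  finally show ?thesis .
qed

lemma trans_in:
  assumes "(\<lambda>w. A w - c * B w) \<in> I" "(\<lambda>w. B w - d * C w) \<in> I"
  shows "(\<lambda>w. A w - (c * d) * C w) \<in> I"
proof -
  have "(\<lambda>w. (A w - c * B w) - (- c) * (B w - d * C w)) \<in> I"
    using I_diff assms by blast
  then show ?thesis by (simp add: algebra_simps)
qed

lemma ins_in:
  assumes "sorted ys" "x \<in> {1..n}" "ys \<in> words n" "u \<in> words n"
  shows "(\<lambda>w. wd (u @ x # ys) w - (inverse q) ^ (length (filter (\<lambda>y. y < x) ys)) * wd (u @ insort x ys) w) \<in> I"
  using assms
proof (induction ys arbitrary: u)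
  case Nil
  then show ?case using I_zero by simp
next
  case (Cons y ys)
  show ?case
  proof (cases "x \<le> y")
    case True
    have "filter (\<lambda>z. z < x) (y # ys) = []" using Cons.prems(1) True by (auto simp: filter_empty_conv)
    then show ?thesis using True I_zero by simp
  next
    case False
    have s: "(\<lambda>w. wd (u @ [x,y] @ ys) w - inverse q * wd (u @ [y,x] @ ys) w) \<in> I"
      using swap_in[of y x u ys] False Cons.prems by auto
    have ih: "(\<lambda>w. wd ((u @ [y]) @ x # ys) w - (inverse q) ^ (length (filter (\<lambda>z. z < x) ys)) * wd ((u @ [y]) @ insort x ys) w) \<in> I"
      using Cons.IH[of "u @ [y]"] Cons.prems by auto
    have "(\<lambda>w. wd (u @ [x,y] @ ys) w - (inverse q * (inverse q) ^ (length (filter (\<lambda>z. z < x) ys))) * wd ((u @ [y]) @ insort x ys) w) \<in> I"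
      by (rule trans_in[OF s]) (use ih in simp)
    then show ?thesis using False by simp
  qed
qed

lemma length_filter_sort: "length (filter P (sort xs)) = length (filter P xs)"
  by (metis mset_filter mset_sort size_mset)

lemma sort_in:
  assumes "\<alpha> \<in> words n"
  shows "(\<lambda>w. wd \<alpha> w - wt q \<alpha> * wd (sort \<alpha>) w) \<in> I"
  using assms
proof (induction \<alpha>)
  case Nil
  then show ?case using I_zero by (simp add: wt_def)
next
  case (Cons x xs)
  have "Fmult (wd [x]) (\<lambda>w. wd xs w - wt q xs * wd (sort xs) w) \<in> I"
    using Cons I_multL wd_Fspace by auto
  then have 1: "(\<lambda>w. wd (x # xs) w - wt q xs * wd (x # sort xs) w) \<in> I"
    by (simp add: Fmult_right_lin Fmult_wd)
  have 2: "(\<lambda>w. wd ([] @ x # sort xs) w - (inverse q) ^ (length (filter (\<lambda>y. y < x) (sort xs))) * wd ([] @ insort x (sort xs)) w) \<in> I"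
    by (rule ins_in) (use Cons.prems in \<open>auto simp: words_def\<close>)
  have "(\<lambda>w. wd (x # xs) w - (wt q xs * (inverse q) ^ (length (filter (\<lambda>y. y < x) (sort xs)))) * wd (insort x (sort xs)) w) \<in> I"
    by (rule trans_in[OF 1]) (use 2 in simp)
  then show ?case by (simp add: wt_def length_filter_sort power_add mult.commute)
qed

end

definition crossl :: "nat list \<Rightarrow> nat list \<Rightarrow> nat" where
  "crossl \<beta> \<gamma> = sum_list (map (\<lambda>x. length (filter (\<lambda>y. y < x) \<gamma>)) \<beta>)"

definition Eexp :: "nat \<Rightarrow> (nat \<Rightarrow> nat) \<Rightarrow> (nat \<Rightarrow> nat) \<Rightarrow> nat" where
  "Eexp n k l = (\<Sum>i\<in>{1..n}. \<Sum>j\<in>{1..<i}. k i * l j)"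

lemma ninv_append: "ninv (\<beta> @ \<gamma>) = ninv \<beta> + ninv \<gamma> + crossl \<beta> \<gamma>"
  by (induction \<beta>) (auto simp: crossl_def)

lemma filter_count:
  assumes "\<gamma> \<in> words n"
  shows "length (filter (\<lambda>y. y < x) \<gamma>) = (\<Sum>j\<in>{1..<x}. count_list \<gamma> j)"
  using assms
proof (induction \<gamma>)
  case Nil then show ?case by simp
next
  case (Cons y ys)
  have "(\<Sum>j\<in>{1..<x}. count_list (y # ys) j) = (\<Sum>j\<in>{1..<x}. (if y = j then 1 else 0) + count_list ys j)"
    by (rule sum.cong) auto
  also have "\<dots> = (\<Sum>j\<in>{1..<x}. (if y = j then 1 else 0)) + (\<Sum>j\<in>{1..<x}. count_list ys j)"
    by (simp add: sum.distrib)
  also have "(\<Sum>j\<in>{1..<x}. (if y = j then 1 else 0)::nat) = (if y \<in> {1..<x} then 1 else 0)"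
    by (simp add: sum.delta)
  finally show ?case using Cons by auto
qed

lemma crossl_Eexp:
  assumes "\<beta> \<in> words n" "\<gamma> \<in> words n"
  shows "crossl \<beta> \<gamma> = Eexp n (pvec \<beta>) (pvec \<gamma>)"
  using assms(1)
proof (induction \<beta>)
  case Nil then show ?case by (simp add: crossl_def Eexp_def pvec_def)
next
  case (Cons x xs)
  have x: "x \<in> {1..n}" using Cons.prems by simp
  have "Eexp n (pvec (x # xs)) (pvec \<gamma>) = (\<Sum>i\<in>{1..n}. \<Sum>j\<in>{1..<i}. (if x = i then 1 else 0) * pvec \<gamma> j + pvec xs i * pvec \<gamma> j)"
    unfolding Eexp_def by (intro sum.cong refl) (simp add: pvec_def algebra_simps)
  also have "\<dots> = (\<Sum>i\<in>{1..n}. \<Sum>j\<in>{1..<i}. (if x = i then 1 else 0) * pvec \<gamma> j) + Eexp n (pvec xs) (pvec \<gamma>)"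
    by (simp add: sum.distrib Eexp_def)
  also have "(\<Sum>i\<in>{1..n}. \<Sum>j\<in>{1..<i}. (if x = i then 1 else 0) * pvec \<gamma> j) = (\<Sum>i\<in>{1..n}. if x = i then (\<Sum>j\<in>{1..<i}. pvec \<gamma> j) else 0)"
    by (intro sum.cong refl) auto
  also have "\<dots> = (\<Sum>j\<in>{1..<x}. pvec \<gamma> j)"
    using x by (simp add: sum.delta)
  also have "\<dots> = length (filter (\<lambda>y. y < x) \<gamma>)"
    using filter_count[OF assms(2)] by (simp add: pvec_def)
  finally show ?case using Cons by (simp add: crossl_def)
qed

lemma wt_append:
  assumes "\<beta> \<in> words n" "\<gamma> \<in> words n"
  shows "wt q (\<beta> @ \<gamma>) = wt q \<beta> * wt q \<gamma> * (inverse q) ^ Eexp n (pvec \<beta>) (pvec \<gamma>)"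
  by (simp add: wt_def ninv_append crossl_Eexp[OF assms] power_add)

lemma finite_le_funs:
  assumes "m \<in> mindex n"
  shows "finite {k. \<forall>i. k i \<le> m i}"
proof -
  have "{k. \<forall>i. k i \<le> m i} \<subseteq> {k. \<forall>x. (x \<in> {1..n} \<longrightarrow> k x \<in> {0..mabs n m}) \<and> (x \<notin> {1..n} \<longrightarrow> k x = 0)}"
  proof (safe)
    fix k x assume k: "\<forall>i. k i \<le> m i"
    { assume "x \<in> {1..n}"
      then have "m x \<le> mabs n m" unfolding mabs_def by (intro member_le_sum) auto
      then show "k x \<in> {0..mabs n m}" using k[rule_format, of x] by auto }
    { assume "x \<notin> {1..n}"
      then show "k x = 0" using k[rule_format, of x] assms by (auto simp: mindex_def) }
  qed
  then show ?thesis using finite_set_of_finite_funs[of "{1..n}" "{0..mabs n m}" 0]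
    by (rule finite_subset) auto
qed

lemma piF_mult:
  assumes f: "f \<in> Fspace n r" and g: "g \<in> Fspace n r"
  shows "piF n q (Fmult f g) = Oqmult n q (piF n q f) (piF n q g)"
proof
  fix m
  show "piF n q (Fmult f g) m = Oqmult n q (piF n q f) (piF n q g) m"
  proof (cases "m \<in> mindex n")
    case False
    have l: "piF n q (Fmult f g) m = 0" using Aset_empty[OF False] by (simp add: piF_def)
    have "Oqmult n q (piF n q f) (piF n q g) m = (\<Sum>k\<in>{k. \<forall>i. k i \<le> m i}. 0)"
      unfolding Oqmult_def
    proof (rule sum.cong[OF refl])
      fix k assume k: "k \<in> {k. \<forall>i. k i \<le> m i}"
      have "k \<notin> mindex n \<or> (\<lambda>i. m i - k i) \<notin> mindex n"
      proof (rule ccontr)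
        assume "\<not> ?thesis"
        then have "m \<in> mindex n" using k unfolding mindex_def by force
        then show False using False by simp
      qed
      then show "inverse q ^ (\<Sum>i = 1..n. \<Sum>j = 1..<i. k i * (m j - k j)) * piF n q f k * piF n q g (\<lambda>i. m i - k i) = 0"
        by (auto simp: piF_def Aset_empty)
    qed
    then show ?thesis using l by simp
  next
    case True
    let ?K = "{k. \<forall>i. k i \<le> m i}"
    let ?S = "Sigma (Aset n m) (\<lambda>\<alpha>. {..length \<alpha>})"
    let ?T = "{(\<beta>,\<gamma>). \<beta> \<in> words n \<and> \<gamma> \<in> words n \<and> (\<lambda>i. pvec \<beta> i + pvec \<gamma> i) = m}"
    let ?F = "\<lambda>(\<beta>,\<gamma>). f \<beta> * g \<gamma> * wt q (\<beta> @ \<gamma>)"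
    have finK: "finite ?K" using finite_le_funs[OF True] .
    have bij: "bij_betw (\<lambda>(\<alpha>,j). (take j \<alpha>, drop j \<alpha>)) ?S ?T"
    proof (rule bij_betwI[where g = "\<lambda>(\<beta>,\<gamma>). (\<beta> @ \<gamma>, length \<beta>)"])
      show "(\<lambda>(\<alpha>, j). (take j \<alpha>, drop j \<alpha>)) \<in> ?S \<rightarrow> ?T"
      proof
        fix x assume "x \<in> ?S"
        then obtain \<alpha> j where x: "x = (\<alpha>,j)" "\<alpha> \<in> words n" "pvec \<alpha> = m" "j \<le> length \<alpha>"
          by (auto simp: Aset_def)
        have w: "take j \<alpha> \<in> words n" "drop j \<alpha> \<in> words n"
          using x(2) words_append[of "take j \<alpha>" "drop j \<alpha>" n] by auto
        have "pvec (take j \<alpha> @ drop j \<alpha>) = m" using x by simp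
        then have "(\<lambda>i. pvec (take j \<alpha>) i + pvec (drop j \<alpha>) i) = m" by (simp only: pvec_append)
        then show "(\<lambda>(\<alpha>, j). (take j \<alpha>, drop j \<alpha>)) x \<in> ?T" using w x by simp
      qed
      show "(\<lambda>(\<beta>, \<gamma>). (\<beta> @ \<gamma>, length \<beta>)) \<in> ?T \<rightarrow> ?S"
      proof
        fix y assume "y \<in> ?T"
        then obtain \<beta> \<gamma> where y: "y = (\<beta>,\<gamma>)" "\<beta> \<in> words n" "\<gamma> \<in> words n" "(\<lambda>i. pvec \<beta> i + pvec \<gamma> i) = m"
          by auto
        then have "pvec (\<beta> @ \<gamma>) = m" by (simp only: pvec_append)
        then show "(\<lambda>(\<beta>, \<gamma>). (\<beta> @ \<gamma>, length \<beta>)) y \<in> ?S" using y by (simp add: Aset_def)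
      qed
      show "\<And>x. x \<in> ?S \<Longrightarrow> (\<lambda>(\<beta>, \<gamma>). (\<beta> @ \<gamma>, length \<beta>)) ((\<lambda>(\<alpha>, j). (take j \<alpha>, drop j \<alpha>)) x) = x"
        by auto
      show "\<And>y. y \<in> ?T \<Longrightarrow> (\<lambda>(\<alpha>, j). (take j \<alpha>, drop j \<alpha>)) ((\<lambda>(\<beta>, \<gamma>). (\<beta> @ \<gamma>, length \<beta>)) y) = y"
        by auto
    qed
    have finS: "finite ?S" by auto
    have finT: "finite ?T" using bij_betw_finite[OF bij] finS by simp
    have "piF n q (Fmult f g) m = (\<Sum>\<alpha>\<in>Aset n m. \<Sum>j\<le>length \<alpha>. f (take j \<alpha>) * g (drop j \<alpha>) * wt q \<alpha>)"
      by (simp add: piF_def Fmult_def sum_distrib_right)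
    also have "\<dots> = (\<Sum>(\<alpha>,j)\<in>?S. f (take j \<alpha>) * g (drop j \<alpha>) * wt q \<alpha>)"
      by (rule sum.Sigma) auto
    also have "\<dots> = (\<Sum>x\<in>?S. ?F ((\<lambda>(\<alpha>,j). (take j \<alpha>, drop j \<alpha>)) x))"
      by (rule sum.cong) auto
    also have "\<dots> = sum ?F ?T"
      by (rule sum.reindex_bij_betw[OF bij])
    also have "\<dots> = (\<Sum>k\<in>?K. sum ?F {x\<in>?T. pvec (fst x) = k})"
      by (rule sum.group[symmetric]) (use finT finK in auto)
    also have "\<dots> = (\<Sum>k\<in>?K. inverse q ^ (\<Sum>i = 1..n. \<Sum>j = 1..<i. k i * (m j - k j)) * piF n q f k * piF n q g (\<lambda>i. m i - k i))"
    proof (rule sum.cong[OF refl])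
      fix k assume k: "k \<in> ?K"
      let ?l = "\<lambda>i. m i - k i"
      have e1: "((\<lambda>i. pvec \<beta> i + pvec \<gamma> i) = m \<and> pvec \<beta> = k) \<longleftrightarrow> (pvec \<beta> = k \<and> pvec \<gamma> = ?l)" for \<beta> \<gamma>
      proof
        assume H: "(\<lambda>i. pvec \<beta> i + pvec \<gamma> i) = m \<and> pvec \<beta> = k"
        have "pvec \<gamma> i = m i - k i" for i
        proof -
          have "pvec \<beta> i + pvec \<gamma> i = m i" using fun_cong[OF conjunct1[OF H], of i] by simp
          then show ?thesis using conjunct2[OF H] by auto
        qed
        then show "pvec \<beta> = k \<and> pvec \<gamma> = ?l" using H by auto
      next
        assume H: "pvec \<beta> = k \<and> pvec \<gamma> = ?l"
        have "pvec \<beta> i + pvec \<gamma> i = m i" for i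
          using H k by auto
        then show "(\<lambda>i. pvec \<beta> i + pvec \<gamma> i) = m \<and> pvec \<beta> = k" using H by auto
      qed
      have set: "{x\<in>?T. pvec (fst x) = k} = Aset n k \<times> Aset n ?l"
      proof (rule set_eqI)
        fix x :: "nat list \<times> nat list"
        obtain \<beta> \<gamma> where x: "x = (\<beta>,\<gamma>)" by (cases x)
        show "x \<in> {x\<in>?T. pvec (fst x) = k} \<longleftrightarrow> x \<in> Aset n k \<times> Aset n ?l"
          unfolding x Aset_def using e1[of \<beta> \<gamma>] by auto
      qed
      have "sum ?F (Aset n k \<times> Aset n ?l) = (\<Sum>\<beta>\<in>Aset n k. \<Sum>\<gamma>\<in>Aset n ?l. ?F (\<beta>,\<gamma>))"
        by (simp add: sum.cartesian_product)
      also have "\<dots> = (\<Sum>\<beta>\<in>Aset n k. \<Sum>\<gamma>\<in>Aset n ?l. inverse q ^ (\<Sum>i = 1..n. \<Sum>j = 1..<i. k i * (m j - k j)) * (f \<beta> * wt q \<beta>) * (g \<gamma> * wt q \<gamma>))"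
      proof (intro sum.cong refl)
        fix \<beta> \<gamma> assume b: "\<beta> \<in> Aset n k" and c: "\<gamma> \<in> Aset n ?l"
        have "Eexp n (pvec \<beta>) (pvec \<gamma>) = (\<Sum>i = 1..n. \<Sum>j = 1..<i. k i * (m j - k j))"
          using b c by (simp add: Aset_def Eexp_def)
        then show "?F (\<beta>,\<gamma>) = inverse q ^ (\<Sum>i = 1..n. \<Sum>j = 1..<i. k i * (m j - k j)) * (f \<beta> * wt q \<beta>) * (g \<gamma> * wt q \<gamma>)"
        proof -
          have "\<beta> \<in> words n" "\<gamma> \<in> words n" using b c by (auto simp: Aset_def)
          from wt_append[OF this, of q] show ?thesis using \<open>Eexp n (pvec \<beta>) (pvec \<gamma>) = _\<close>
            by (simp add: algebra_simps)
        qed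
      qed
      also have "\<dots> = inverse q ^ (\<Sum>i = 1..n. \<Sum>j = 1..<i. k i * (m j - k j)) * (\<Sum>\<beta>\<in>Aset n k. \<Sum>\<gamma>\<in>Aset n ?l. (f \<beta> * wt q \<beta>) * (g \<gamma> * wt q \<gamma>))"
        by (simp add: sum_distrib_left mult.assoc)
      also have "\<dots> = inverse q ^ (\<Sum>i = 1..n. \<Sum>j = 1..<i. k i * (m j - k j)) * (piF n q f k * piF n q g ?l)"
        by (simp only: piF_def sum_product)
      also have "\<dots> = inverse q ^ (\<Sum>i = 1..n. \<Sum>j = 1..<i. k i * (m j - k j)) * piF n q f k * piF n q g ?l"
        by (simp only: mult.assoc)
      finally show "sum ?F {x\<in>?T. pvec (fst x) = k} = inverse q ^ (\<Sum>i = 1..n. \<Sum>j = 1..<i. k i * (m j - k j)) * piF n q f k * piF n q g ?l"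
        using set by simp
    qed
    also have "\<dots> = Oqmult n q (piF n q f) (piF n q g) m" by (simp add: Oqmult_def)
    finally show ?thesis .
  qed
qed

definition Sx :: "nat \<Rightarrow> (nat \<Rightarrow> nat) \<Rightarrow> nat" where
  "Sx n k = (\<Sum>i\<in>{1..n}. \<Sum>j\<in>{i<..n}. k i * k j)"

definition ex :: "nat \<Rightarrow> nat \<Rightarrow> nat" where "ex x = (\<lambda>j. if j = x then 1 else 0)"

lemma Sx_Suc: "Sx (Suc n) k = Sx n k + k (Suc n) * (\<Sum>i\<in>{1..n}. k i)"
proof -
  have "Sx (Suc n) k = (\<Sum>i\<in>{1..n}. \<Sum>j\<in>{i<..Suc n}. k i * k j) + (\<Sum>j\<in>{Suc n<..Suc n}. k (Suc n) * k j)"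
    unfolding Sx_def by (simp add: sum.cl_ivl_Suc)
  also have "(\<Sum>j\<in>{Suc n<..Suc n}. k (Suc n) * k j) = 0" by simp
  also have "(\<Sum>i\<in>{1..n}. \<Sum>j\<in>{i<..Suc n}. k i * k j) = (\<Sum>i\<in>{1..n}. (\<Sum>j\<in>{i<..n}. k i * k j) + k i * k (Suc n))"
  proof (rule sum.cong[OF refl])
    fix i assume "i \<in> {1..n}"
    then have "{i<..Suc n} = insert (Suc n) {i<..n}" by auto
    then show "(\<Sum>j\<in>{i<..Suc n}. k i * k j) = (\<Sum>j\<in>{i<..n}. k i * k j) + k i * k (Suc n)" by simp
  qed
  finally show ?thesis by (simp add: Sx_def sum.distrib sum_distrib_left sum_distrib_right mult.commute)
qed

lemma Sx_step:
  assumes "x \<in> {1..n}"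
  shows "Sx n (\<lambda>j. k j + ex x j) + k x = Sx n k + (\<Sum>j\<in>{1..n}. k j)"
  using assms
proof (induction n)
  case 0 then show ?case by simp
next
  case (Suc n)
  have s1: "(\<Sum>i\<in>{1..n}. k i + ex x i) = (\<Sum>i\<in>{1..n}. k i) + (if x \<in> {1..n} then 1 else 0)"
    by (simp add: sum.distrib ex_def)
  show ?case
  proof (cases "x = Suc n")
    case True
    then have "x \<notin> {1..n}" by auto
    then have "Sx n (\<lambda>j. k j + ex x j) = Sx n k"
      unfolding Sx_def ex_def by (intro sum.cong refl) auto
    then show ?thesis using True s1 by (simp add: Sx_Suc ex_def sum.cl_ivl_Suc algebra_simps)
  next
    case False
    then have x: "x \<in> {1..n}" using Suc.prems by auto
    have "Sx (Suc n) (\<lambda>j. k j + ex x j) + k x = (Sx n (\<lambda>j. k j + ex x j) + k x) + k (Suc n) * ((\<Sum>i\<in>{1..n}. k i) + 1)"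
      using False s1 x by (simp add: Sx_Suc ex_def)
    also have "\<dots> = Sx n k + (\<Sum>j\<in>{1..n}. k j) + k (Suc n) * ((\<Sum>i\<in>{1..n}. k i) + 1)"
      using Suc.IH[OF x] by simp
    also have "\<dots> = Sx (Suc n) k + (\<Sum>j\<in>{1..Suc n}. k j)"
      by (simp add: Sx_Suc sum.cl_ivl_Suc algebra_simps)
    finally show ?thesis .
  qed
qed

lemma qint_add: "qint t (a + b) = qint t b + t ^ b * qint t a"
  unfolding qint_def
proof (induction a)
  case 0 then show ?case by simp
next
  case (Suc a)
  then show ?case by (simp add: algebra_simps power_add)
qed

lemma telescope:
  "(\<Sum>x\<in>{1..n::nat}. qint t (a x) * t ^ (\<Sum>j\<in>{x<..n}. a j)) = qint t (\<Sum>x\<in>{1..n}. a x)"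
proof (induction n)
  case 0 then show ?case by (simp add: qint_def)
next
  case (Suc n)
  have "(\<Sum>x\<in>{1..Suc n}. qint t (a x) * t ^ (\<Sum>j\<in>{x<..Suc n}. a j))
     = (\<Sum>x\<in>{1..n}. qint t (a x) * t ^ (\<Sum>j\<in>{x<..n}. a j) * t ^ a (Suc n)) + qint t (a (Suc n))"
  proof -
    have "(\<Sum>x\<in>{1..n}. qint t (a x) * t ^ (\<Sum>j\<in>{x<..Suc n}. a j)) = (\<Sum>x\<in>{1..n}. qint t (a x) * t ^ (\<Sum>j\<in>{x<..n}. a j) * t ^ a (Suc n))"
    proof (rule sum.cong[OF refl])
      fix x assume "x \<in> {1..n}"
      then have "{x<..Suc n} = insert (Suc n) {x<..n}" by auto
      then show "qint t (a x) * t ^ (\<Sum>j\<in>{x<..Suc n}. a j) = qint t (a x) * t ^ (\<Sum>j\<in>{x<..n}. a j) * t ^ a (Suc n)"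
        by (simp add: power_add)
    qed
    then show ?thesis by (simp add: sum.cl_ivl_Suc)
  qed
  also have "\<dots> = t ^ a (Suc n) * qint t (\<Sum>x\<in>{1..n}. a x) + qint t (a (Suc n))"
    using Suc.IH by (simp add: sum_distrib_right[symmetric])
  also have "\<dots> = qint t (\<Sum>x\<in>{1..Suc n}. a x)"
    by (simp add: sum.cl_ivl_Suc qint_add)
  finally show ?case .
qed

definition Gs :: "nat \<Rightarrow> real \<Rightarrow> (nat \<Rightarrow> nat) \<Rightarrow> real" where
  "Gs n t k = (\<Sum>\<alpha>\<in>Aset n k. (inverse t) ^ ninv \<alpha>)"

definition kdec :: "(nat \<Rightarrow> nat) \<Rightarrow> nat \<Rightarrow> nat \<Rightarrow> nat" where
  "kdec k x = (\<lambda>j. if j = x then k j - 1 else k j)"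

lemma pvec_Cons: "pvec (x # \<beta>) = (\<lambda>j. (if x = j then 1 else 0) + pvec \<beta> j)"
  by (auto simp: pvec_def)

lemma Aset_hd:
  assumes "k x > 0" "x \<in> {1..n}"
  shows "{\<alpha>\<in>Aset n k. \<alpha> \<noteq> [] \<and> hd \<alpha> = x} = (\<lambda>\<beta>. x # \<beta>) ` Aset n (kdec k x)"
proof (rule set_eqI)
  fix \<alpha>
  show "\<alpha> \<in> {\<alpha>\<in>Aset n k. \<alpha> \<noteq> [] \<and> hd \<alpha> = x} \<longleftrightarrow> \<alpha> \<in> (\<lambda>\<beta>. x # \<beta>) ` Aset n (kdec k x)"
  proof
    assume "\<alpha> \<in> {\<alpha>\<in>Aset n k. \<alpha> \<noteq> [] \<and> hd \<alpha> = x}"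
    then obtain \<beta> where a: "\<alpha> = x # \<beta>" "x # \<beta> \<in> words n" "pvec (x # \<beta>) = k"
      by (cases \<alpha>) (auto simp: Aset_def)
    have "pvec \<beta> = kdec k x"
    proof
      fix j show "pvec \<beta> j = kdec k x j"
        using fun_cong[OF a(3), of j] by (auto simp: pvec_Cons kdec_def)
    qed
    then show "\<alpha> \<in> (\<lambda>\<beta>. x # \<beta>) ` Aset n (kdec k x)" using a by (auto simp: Aset_def)
  next
    assume "\<alpha> \<in> (\<lambda>\<beta>. x # \<beta>) ` Aset n (kdec k x)"
    then obtain \<beta> where b: "\<alpha> = x # \<beta>" "\<beta> \<in> words n" "pvec \<beta> = kdec k x"
      by (auto simp: Aset_def)
    have "pvec (x # \<beta>) = k"
    proof
      fix j show "pvec (x # \<beta>) j = k j" using b(3) assms(1) by (auto simp: pvec_Cons kdec_def)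
    qed
    then show "\<alpha> \<in> {\<alpha>\<in>Aset n k. \<alpha> \<noteq> [] \<and> hd \<alpha> = x}" using b assms(2) by (auto simp: Aset_def)
  qed
qed

lemma Aset_hd0:
  assumes "k x = 0"
  shows "{\<alpha>\<in>Aset n k. \<alpha> \<noteq> [] \<and> hd \<alpha> = x} = {}"
proof -
  have False if A: "\<alpha> \<in> Aset n k" "\<alpha> \<noteq> []" "hd \<alpha> = x" for \<alpha>
  proof -
    obtain \<beta> where "\<alpha> = x # \<beta>" using A(2,3) by (cases \<alpha>) auto
    then have "pvec \<alpha> x > 0" by (simp add: pvec_def)
    then show False using A assms by (simp add: Aset_def)
  qed
  then show ?thesis by blast
qed

lemma kdec_mindex: "k \<in> mindex n \<Longrightarrow> kdec k x \<in> mindex n"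
  by (auto simp: mindex_def kdec_def)

lemma kdec_plus: "k x > 0 \<Longrightarrow> (\<lambda>j. kdec k x j + ex x j) = k"
  by (auto simp: kdec_def ex_def)

lemma mabs_kdec: "k x > 0 \<Longrightarrow> x \<in> {1..n} \<Longrightarrow> mabs n (kdec k x) + 1 = mabs n k"
proof -
  assume a: "k x > 0" "x \<in> {1..n}"
  have "mabs n k = (\<Sum>j\<in>{1..n}. kdec k x j + ex x j)" using fun_cong[OF kdec_plus[of k x, OF a(1)]] by (simp add: mabs_def)
  also have "\<dots> = mabs n (kdec k x) + 1" using a(2) by (simp add: sum.distrib mabs_def ex_def)
  finally show ?thesis by simp
qed

lemma split3:
  assumes "x \<in> {1..n}"
  shows "(\<Sum>j\<in>{1..n::nat}. a j) = (\<Sum>j\<in>{1..<x}. a j) + a x + (\<Sum>j\<in>{x<..n}. (a j::nat))"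
proof -
  have e: "{1..n} = insert x ({1..<x} \<union> {x<..n})" using assms by auto
  have "(\<Sum>j\<in>{1..n}. a j) = a x + (\<Sum>j\<in>{1..<x} \<union> {x<..n}. a j)" unfolding e by (subst sum.insert) auto
  also have "(\<Sum>j\<in>{1..<x} \<union> {x<..n}. a j) = (\<Sum>j\<in>{1..<x}. a j) + (\<Sum>j\<in>{x<..n}. a j)"
    by (rule sum.union_disjoint) auto
  finally show ?thesis by simp
qed

lemma qfact_Suc: "qfact t (Suc m) = qfact t m * qint t (Suc m)"
  by (simp add: qfact_def)

lemma qfm_kdec:
  assumes "k x > 0" "x \<in> {1..n}"
  shows "qfact_multi n t k = qfact_multi n t (kdec k x) * qint t (k x)"
proof -
  have "qfact_multi n t k = qfact t (k x) * (\<Prod>i\<in>{1..n}-{x}. qfact t (k i))"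
    unfolding qfact_multi_def using assms(2) by (simp add: prod.remove)
  also have "(\<Prod>i\<in>{1..n}-{x}. qfact t (k i)) = (\<Prod>i\<in>{1..n}-{x}. qfact t (kdec k x i))"
    by (rule prod.cong) (auto simp: kdec_def)
  also have "qfact t (k x) = qfact t (kdec k x x) * qint t (k x)"
    using assms(1) qfact_Suc[of t "k x - 1"] by (simp add: kdec_def)
  finally show ?thesis
    unfolding qfact_multi_def using assms(2) by (simp add: prod.remove[of _ x "\<lambda>i. qfact t (kdec k x i)"])
qed

lemma Gs_id:
  assumes t: "t > 0"
  shows "k \<in> mindex n \<Longrightarrow> mabs n k = d \<Longrightarrow> Gs n t k * qfact_multi n t k * t ^ Sx n k = qfact t d"
proof (induction d arbitrary: k)
  case 0
  have k0: "k = (\<lambda>_. 0)"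
  proof
    fix i show "k i = 0" using 0 by (cases "i \<in> {1..n}") (auto simp: mindex_def mabs_def)
  qed
  have "Aset n k = {[]}"
  proof (rule set_eqI)
    fix \<alpha> show "\<alpha> \<in> Aset n k \<longleftrightarrow> \<alpha> \<in> {[]}"
      using length_pvec[of \<alpha> n] 0 by (auto simp: Aset_def k0 pvec_def)
  qed
  then show ?case using k0 by (simp add: Gs_def qfact_multi_def qfact_def Sx_def)
next
  case (Suc d)
  have ne: "\<alpha> \<noteq> []" if "\<alpha> \<in> Aset n k" for \<alpha>
    using that length_pvec[of \<alpha> n] Suc.prems by (auto simp: Aset_def)
  have hd_in: "hd \<alpha> \<in> {1..n}" if "\<alpha> \<in> Aset n k" for \<alpha>
  proof -
    have "hd \<alpha> \<in> set \<alpha>" using ne[OF that] by (rule hd_in_set)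
    moreover have "set \<alpha> \<subseteq> {1..n}" using that by (auto simp: Aset_def words_def)
    ultimately show ?thesis by blast
  qed
  define R where "R x = (\<Sum>j\<in>{x<..n}. k j)" for x
  have trm: "(\<Sum>\<alpha>\<in>{\<alpha>\<in>Aset n k. \<alpha> \<noteq> [] \<and> hd \<alpha> = x}. (inverse t) ^ ninv \<alpha>) * qfact_multi n t k * t ^ Sx n k
      = qfact t d * qint t (k x) * t ^ R x" if x: "x \<in> {1..n}" for x
  proof (cases "k x = 0")
    case True
    then show ?thesis unfolding Aset_hd0[of k x n, OF True] by (simp add: qint_def)
  next
    case False
    then have kx: "k x > 0" by simp
    let ?k' = "kdec k x"
    let ?L = "\<Sum>j\<in>{1..<x}. k j"
    have mk': "?k' \<in> mindex n" using kdec_mindex Suc.prems by blast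
    have dk': "mabs n ?k' = d" using mabs_kdec[of k x n, OF kx x] Suc.prems by simp
    have IH: "Gs n t ?k' * qfact_multi n t ?k' * t ^ Sx n ?k' = qfact t d"
      using Suc.IH[OF mk' dk'] .
    have L: "length (filter (\<lambda>y. y < x) \<beta>) = ?L" if "\<beta> \<in> Aset n ?k'" for \<beta>
    proof -
      have "length (filter (\<lambda>y. y < x) \<beta>) = (\<Sum>j\<in>{1..<x}. pvec \<beta> j)"
        using filter_count[of \<beta> n x] that by (simp add: Aset_def pvec_def)
      also have "\<dots> = ?L" using that by (intro sum.cong refl) (auto simp: Aset_def kdec_def)
      finally show ?thesis .
    qed
    have "(\<Sum>\<alpha>\<in>{\<alpha>\<in>Aset n k. \<alpha> \<noteq> [] \<and> hd \<alpha> = x}. (inverse t) ^ ninv \<alpha>)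
        = (\<Sum>\<beta>\<in>Aset n ?k'. (inverse t) ^ ninv (x # \<beta>))"
      unfolding Aset_hd[of k x n, OF kx x] by (subst sum.reindex) (auto simp: inj_on_def)
    also have "\<dots> = (\<Sum>\<beta>\<in>Aset n ?k'. (inverse t) ^ ?L * (inverse t) ^ ninv \<beta>)"
      by (intro sum.cong refl) (simp add: L power_add)
    also have "\<dots> = (inverse t) ^ ?L * Gs n t ?k'" by (simp add: Gs_def sum_distrib_left)
    finally have e1: "(\<Sum>\<alpha>\<in>{\<alpha>\<in>Aset n k. \<alpha> \<noteq> [] \<and> hd \<alpha> = x}. (inverse t) ^ ninv \<alpha>) = (inverse t) ^ ?L * Gs n t ?k'" .
    have sx: "Sx n k + ?k' x = Sx n ?k' + d"
      using Sx_step[OF x, of ?k'] kdec_plus[of k x, OF kx] dk' by (simp add: mabs_def)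
    have dsplit: "d = ?L + ?k' x + R x"
    proof -
      have "d = (\<Sum>j\<in>{1..n}. ?k' j)" using dk' by (simp add: mabs_def)
      also have "\<dots> = (\<Sum>j\<in>{1..<x}. ?k' j) + ?k' x + (\<Sum>j\<in>{x<..n}. ?k' j)" by (rule split3[OF x])
      also have "(\<Sum>j\<in>{1..<x}. ?k' j) = ?L" by (intro sum.cong refl) (auto simp: kdec_def)
      also have "(\<Sum>j\<in>{x<..n}. ?k' j) = R x" unfolding R_def by (intro sum.cong refl) (auto simp: kdec_def)
      finally show ?thesis .
    qed
    have p1: "t ^ Sx n k * t ^ ?k' x = t ^ Sx n ?k' * t ^ ?L * t ^ ?k' x * t ^ R x"
      using sx dsplit by (metis power_add mult.assoc)
    have p2: "t ^ Sx n k = t ^ Sx n ?k' * t ^ ?L * t ^ R x"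
      using p1 t by (simp add: mult.commute mult.left_commute)
    have "(inverse t) ^ ?L * t ^ ?L = 1" using t by (simp add: power_mult_distrib[symmetric])
    then show ?thesis
      unfolding e1 qfm_kdec[of k x n t, OF kx x] p2 IH[symmetric]
      by (simp add: algebra_simps)
  qed
  have "Gs n t k = (\<Sum>x\<in>{1..n}. \<Sum>\<alpha>\<in>{\<alpha>\<in>Aset n k. hd \<alpha> = x}. (inverse t) ^ ninv \<alpha>)"
    unfolding Gs_def by (rule sum.group[symmetric]) (use hd_in in auto)
  also have "\<dots> = (\<Sum>x\<in>{1..n}. \<Sum>\<alpha>\<in>{\<alpha>\<in>Aset n k. \<alpha> \<noteq> [] \<and> hd \<alpha> = x}. (inverse t) ^ ninv \<alpha>)"
    by (intro sum.cong refl arg_cong[where f = "\<lambda>A. sum _ A"]) (use ne in auto)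
  finally have "Gs n t k * qfact_multi n t k * t ^ Sx n k = (\<Sum>x\<in>{1..n}. qfact t d * qint t (k x) * t ^ R x)"
    using trm by (simp add: sum_distrib_right)
  also have "\<dots> = qfact t d * qint t (mabs n k)"
    using telescope[of t k n] by (simp add: R_def mabs_def sum_distrib_left[symmetric] mult.assoc)
  also have "\<dots> = qfact t (Suc d)" using Suc.prems by (simp add: qfact_Suc)
  finally show ?case .
qed

definition Nk :: "nat \<Rightarrow> complex \<Rightarrow> (nat \<Rightarrow> nat) \<Rightarrow> real" where
  "Nk n q k = (\<Sum>\<alpha>\<in>Aset n k. (cmod (wt q \<alpha>))^2)"

definition blk :: "nat \<Rightarrow> (nat list \<Rightarrow> complex) \<Rightarrow> (nat \<Rightarrow> nat) \<Rightarrow> real" where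
  "blk n f k = sqrt (\<Sum>\<alpha>\<in>Aset n k. (cmod (f \<alpha>))^2)"

definition sec :: "nat \<Rightarrow> complex \<Rightarrow> ((nat \<Rightarrow> nat) \<Rightarrow> complex) \<Rightarrow> nat list \<Rightarrow> complex" where
  "sec n q a = (\<lambda>\<alpha>. if \<alpha> \<in> words n then a (pvec \<alpha>) * cnj (wt q \<alpha>) / Nk n q (pvec \<alpha>) else 0)"

lemma normF_circ_blk: "normF_circ n f \<rho> = (\<Sum>\<^sub>\<infinity>k\<in>mindex n. blk n f k * \<rho> ^ mabs n k)"
  by (simp add: normF_circ_def blk_def Aset_def)

lemma qint_ge1: "t \<ge> 0 \<Longrightarrow> j \<ge> 1 \<Longrightarrow> qint t j \<ge> 1"
proof -
  assume t: "t \<ge> 0" and j: "j \<ge> 1"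
  have "qint t j = 1 + (\<Sum>i\<in>{..<j}-{0}. t ^ i)"
    unfolding qint_def using j by (subst sum.remove[of _ 0]) auto
  also have "\<dots> \<ge> 1" using t by (simp add: sum_nonneg)
  finally show ?thesis .
qed

lemma qfact_pos: "t \<ge> 0 \<Longrightarrow> qfact t m > 0"
  unfolding qfact_def using qint_ge1 by (intro prod_pos) (fastforce)

lemma qfm_pos: "t \<ge> 0 \<Longrightarrow> qfact_multi n t k > 0"
  unfolding qfact_multi_def using qfact_pos by (intro prod_pos) auto

lemma Bterm_nonneg: "Bterm n q k \<ge> 0"
  unfolding Bterm_def uq_def using qfm_pos[of "(cmod q)^2" n k] qfact_pos[of "(cmod q)^2"]
  by (intro mult_nonneg_nonneg) (auto intro!: divide_nonneg_pos less_imp_le)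

lemma count_replicate: "count_list (replicate m x) x = m"
  by (induction m) auto

lemma cmod_wt_sq: "q \<noteq> 0 \<Longrightarrow> (cmod (wt q \<alpha>))^2 = (inverse ((cmod q)^2)) ^ ninv \<alpha>"
  by (simp add: wt_def norm_power norm_inverse power_mult_distrib[symmetric] power_inverse
      flip: power_mult) (simp add: power_mult mult.commute)

lemma Nk_Gs: "q \<noteq> 0 \<Longrightarrow> Nk n q k = Gs n ((cmod q)^2) k"
  by (simp add: Nk_def Gs_def cmod_wt_sq)

lemma uq_sq: "(uq n q k)^2 = ((cmod q)^2) ^ Sx n k"
  by (simp add: uq_def Sx_def power_mult[symmetric] mult.commute)

lemma Bterm_Nk:
  assumes q: "q \<noteq> 0" and k: "k \<in> mindex n"
  shows "Nk n q k > 0" "Bterm n q k = 1 / sqrt (Nk n q k)"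
proof -
  define t where "t = (cmod q)^2"
  have t: "t > 0" using q by (simp add: t_def)
  have id: "Nk n q k * qfact_multi n t k * t ^ Sx n k = qfact t (mabs n k)"
    using Gs_id[OF t k refl] Nk_Gs[OF q] by (simp add: t_def)
  have N0: "Nk n q k \<ge> 0" by (simp add: Nk_def sum_nonneg)
  have pos: "qfact t (mabs n k) > 0" "qfact_multi n t k > 0" "t ^ Sx n k > 0"
    using qfact_pos qfm_pos t by auto
  show Npos: "Nk n q k > 0"
  proof (rule ccontr)
    assume "\<not> Nk n q k > 0"
    then have "Nk n q k = 0" using N0 by simp
    then show False using id pos by simp
  qed
  have "(Bterm n q k)^2 = qfact_multi n t k / qfact t (mabs n k) * t ^ Sx n k"
    unfolding Bterm_def power_mult_distrib uq_sq t_def[symmetric] using pos by simp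
  also have "\<dots> = 1 / Nk n q k" using id pos Npos by (simp add: field_simps)
  finally have sq: "(Bterm n q k)^2 = 1 / Nk n q k" .
  have "Bterm n q k \<ge> 0" by (rule Bterm_nonneg)
  then have "Bterm n q k = sqrt ((Bterm n q k)^2)" by simp
  then show "Bterm n q k = 1 / sqrt (Nk n q k)" using sq by (simp add: real_sqrt_divide)
qed

lemma Aset_nonempty:
  assumes "k \<in> mindex n"
  shows "Aset n k \<noteq> {}"
proof -
  define w where "w = concat (map (\<lambda>i. replicate (k i) i) [1..<Suc n])"
  have cnt: "count_list (concat (map (\<lambda>i. replicate (k i) i) L)) j = (if j \<in> set L then k j else 0)"
    if "distinct L" for L j
    using that by (induction L) (auto simp: count_list_0_iff count_replicate)
  have "w \<in> words n" by (auto simp: w_def words_def)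
  moreover have "pvec w = k"
  proof
    fix j show "pvec w j = k j" using cnt[of "[1..<Suc n]" j] assms
      by (auto simp: w_def pvec_def mindex_def)
  qed
  ultimately show ?thesis by (auto simp: Aset_def)
qed

lemma piF_bound:
  assumes q: "q \<noteq> 0"
  shows "cmod (piF n q f k) * Bterm n q k \<le> blk n f k"
proof (cases "k \<in> mindex n")
  case False
  then show ?thesis by (simp add: piF_def Aset_empty blk_def)
next
  case True
  have "cmod (piF n q f k) \<le> (\<Sum>\<alpha>\<in>Aset n k. \<bar>cmod (f \<alpha>)\<bar> * \<bar>cmod (wt q \<alpha>)\<bar>)"
    unfolding piF_def by (rule order.trans[OF norm_sum]) (simp add: norm_mult)
  also have "\<dots> \<le> L2_set (\<lambda>\<alpha>. cmod (f \<alpha>)) (Aset n k) * L2_set (\<lambda>\<alpha>. cmod (wt q \<alpha>)) (Aset n k)"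
    by (rule L2_set_mult_ineq)
  also have "\<dots> = blk n f k * sqrt (Nk n q k)" by (simp add: L2_set_def blk_def Nk_def)
  finally have "cmod (piF n q f k) \<le> blk n f k * sqrt (Nk n q k)" .
  then have "Bterm n q k * cmod (piF n q f k) \<le> Bterm n q k * (blk n f k * sqrt (Nk n q k))"
    by (rule mult_left_mono) (rule Bterm_nonneg)
  also have "\<dots> = blk n f k" using Bterm_Nk[OF q True] by simp
  finally show ?thesis by (simp add: mult.commute)
qed

lemma piF_sec:
  assumes q: "q \<noteq> 0" and a: "\<And>k. k \<notin> mindex n \<Longrightarrow> a k = 0"
  shows "piF n q (sec n q a) = a"
proof
  fix k show "piF n q (sec n q a) k = a k"
  proof (cases "k \<in> mindex n")
    case False then show ?thesis using a by (simp add: piF_def Aset_empty)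
  next
    case True
    have N: "Nk n q k > 0" using Bterm_Nk[OF q True] by simp
    have "piF n q (sec n q a) k = (\<Sum>\<alpha>\<in>Aset n k. a k / Nk n q k * (cnj (wt q \<alpha>) * wt q \<alpha>))"
      unfolding piF_def sec_def by (intro sum.cong refl) (auto simp: Aset_def)
    also have "\<dots> = a k / Nk n q k * (\<Sum>\<alpha>\<in>Aset n k. cnj (wt q \<alpha>) * wt q \<alpha>)"
      by (simp add: sum_distrib_left)
    also have "(\<Sum>\<alpha>\<in>Aset n k. cnj (wt q \<alpha>) * wt q \<alpha>) = (\<Sum>\<alpha>\<in>Aset n k. complex_of_real ((cmod (wt q \<alpha>))^2))"
      by (intro sum.cong refl) (metis complex_norm_square mult.commute of_real_power)
    also have "(\<Sum>\<alpha>\<in>Aset n k. complex_of_real ((cmod (wt q \<alpha>))^2)) = complex_of_real (Nk n q k)"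
      by (simp add: Nk_def)
    finally show ?thesis using N by simp
  qed
qed

lemma blk_sec:
  assumes q: "q \<noteq> 0" and k: "k \<in> mindex n"
  shows "blk n (sec n q a) k = cmod (a k) * Bterm n q k"
proof -
  have N: "Nk n q k > 0" using Bterm_Nk[OF q k] by simp
  have "(\<Sum>\<alpha>\<in>Aset n k. (cmod (sec n q a \<alpha>))^2) = (\<Sum>\<alpha>\<in>Aset n k. (cmod (a k))^2 / (Nk n q k)^2 * (cmod (wt q \<alpha>))^2)"
    unfolding sec_def by (intro sum.cong refl) (auto simp: Aset_def norm_mult norm_divide power_mult_distrib power_divide)
  also have "\<dots> = (cmod (a k))^2 / (Nk n q k)^2 * Nk n q k" by (simp add: sum_distrib_left Nk_def)
  also have "\<dots> = (cmod (a k))^2 / Nk n q k" using N by (simp add: power2_eq_square)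
  finally show ?thesis using N Bterm_Nk(2)[OF q k]
    by (simp add: blk_def real_sqrt_divide)
qed

definition Md :: "nat \<Rightarrow> nat \<Rightarrow> (nat \<Rightarrow> nat) set" where
  "Md n d = {k \<in> mindex n. mabs n k = d}"
definition Mle :: "nat \<Rightarrow> nat \<Rightarrow> (nat \<Rightarrow> nat) set" where
  "Mle n D = {k \<in> mindex n. mabs n k \<le> D}"

lemma Mle_sub: "Mle n D \<subseteq> {k. \<forall>x. (x \<in> {1..n} \<longrightarrow> k x \<in> {0..D}) \<and> (x \<notin> {1..n} \<longrightarrow> k x = 0)}"
proof (safe)
  fix k x assume k: "k \<in> Mle n D"
  { assume x: "x \<in> {1..n}"
    have "k x \<le> mabs n k" unfolding mabs_def using x by (intro member_le_sum) auto
    then show "k x \<in> {0..D}" using k by (auto simp: Mle_def) }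
  { assume "x \<notin> {1..n}" then show "k x = 0" using k by (auto simp: Mle_def mindex_def) }
qed

lemma finite_Mle: "finite (Mle n D)"
  using finite_set_of_finite_funs[of "{1..n}" "{0..D}" 0] Mle_sub by (rule finite_subset[rotated]) auto

lemma finite_Md: "finite (Md n d)"
  using finite_Mle[of n d] by (rule finite_subset[rotated]) (auto simp: Md_def Mle_def)

lemma card_Md: "card (Md n d) \<le> (d+1)^n"
proof -
  have "card (Md n d) \<le> card (PiE {1..n} (\<lambda>_. {0..d}))"
  proof (rule card_inj_on_le)
    show "inj_on (\<lambda>k. restrict k {1..n}) (Md n d)"
    proof (rule inj_onI)
      fix k l assume kl: "k \<in> Md n d" "l \<in> Md n d" "restrict k {1..n} = restrict l {1..n}"
      show "k = l"
      proof
        fix i show "k i = l i"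
        proof (cases "i \<in> {1..n}")
          case True then show ?thesis using fun_cong[OF kl(3), of i] by simp
        next
          case False then show ?thesis using kl(1,2) by (auto simp: Md_def mindex_def)
        qed
      qed
    qed
    show "(\<lambda>k. restrict k {1..n}) ` Md n d \<subseteq> PiE {1..n} (\<lambda>_. {0..d})"
      using Mle_sub[of n d] by (auto simp: Md_def Mle_def)
  qed (simp add: finite_PiE)
  also have "\<dots> = (d+1)^n" by (simp add: card_PiE)
  finally show ?thesis .
qed

lemma wblock_sq_Md: "(wblock n f d)^2 = (\<Sum>k\<in>Md n d. (blk n f k)^2)"
proof -
  have "(wblock n f d)^2 = (\<Sum>\<alpha>\<in>{\<alpha>\<in>words n. length \<alpha> = d}. (cmod (f \<alpha>))^2)"
    by (simp add: wblock_def sum_nonneg)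
  also have "\<dots> = (\<Sum>k\<in>Md n d. \<Sum>\<alpha>\<in>{\<alpha>\<in>{\<alpha>\<in>words n. length \<alpha> = d}. pvec \<alpha> = k}. (cmod (f \<alpha>))^2)"
    by (rule sum.group[symmetric]) (use finite_Md[of n d] in \<open>auto simp: finite_words_len Md_def pvec_mindex length_pvec\<close>)
  also have "\<dots> = (\<Sum>k\<in>Md n d. (blk n f k)^2)"
  proof (rule sum.cong[OF refl])
    fix k assume "k \<in> Md n d"
    then have "{\<alpha>\<in>{\<alpha>\<in>words n. length \<alpha> = d}. pvec \<alpha> = k} = Aset n k"
      by (auto simp: Aset_def Md_def length_pvec[symmetric])
    then show "(\<Sum>\<alpha>\<in>{\<alpha>\<in>{\<alpha>\<in>words n. length \<alpha> = d}. pvec \<alpha> = k}. (cmod (f \<alpha>))^2) = (blk n f k)^2"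
      by (simp add: blk_def sum_nonneg)
  qed
  finally show ?thesis .
qed

lemma sum_blk_Md: "(\<Sum>k\<in>Md n d. blk n f k) \<le> sqrt (card (Md n d)) * wblock n f d"
proof -
  have "(\<Sum>k\<in>Md n d. blk n f k) = (\<Sum>k\<in>Md n d. \<bar>blk n f k\<bar> * \<bar>1\<bar>)" by (simp add: blk_def abs_of_nonneg real_sqrt_ge_zero sum_nonneg)
  also have "\<dots> \<le> L2_set (blk n f) (Md n d) * L2_set (\<lambda>_. 1) (Md n d)" by (rule L2_set_mult_ineq)
  also have "L2_set (blk n f) (Md n d) = wblock n f d"
    unfolding L2_set_def wblock_sq_Md[symmetric] by (simp add: wblock_def abs_of_nonneg real_sqrt_ge_zero sum_nonneg)
  also have "L2_set (\<lambda>_. 1::real) (Md n d) = sqrt (card (Md n d))" by (simp add: L2_set_constant)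
  finally show ?thesis by (simp add: mult.commute)
qed

lemma wblock_le_Md: "wblock n f d \<le> (\<Sum>k\<in>Md n d. blk n f k)"
proof -
  have "wblock n f d = L2_set (blk n f) (Md n d)"
    unfolding L2_set_def wblock_sq_Md[symmetric] by (simp add: wblock_def abs_of_nonneg real_sqrt_ge_zero sum_nonneg)
  also have "\<dots> \<le> (\<Sum>k\<in>Md n d. blk n f k)" by (rule L2_set_le_sum) (simp add: blk_def sum_nonneg)
  finally show ?thesis .
qed

lemma poly_bound:
  fixes x :: real
  assumes "0 \<le> x" "x < 1"
  shows "\<exists>B. \<forall>d. real ((d+1)^n) * x ^ d \<le> B"
proof (cases "n = 0")
  case True
  then show ?thesis using assms by (intro exI[of _ 1]) (auto intro: power_le_one)
next
  case False
  define y where "y = root n x"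
  have y: "0 \<le> y" "y < 1" "y ^ n = x" using assms False by (auto simp: y_def real_root_ge_zero)
  have "(\<lambda>d. of_nat d * y ^ d) \<longlonglongrightarrow> 0" using y by (intro powser_times_n_limit_0) simp
  then have "Bseq (\<lambda>d. of_nat d * y ^ d)" by (rule convergent_imp_Bseq[OF convergentI])
  then obtain K where K0: "\<forall>d. norm (of_nat d * y ^ d) \<le> K" by (auto simp: Bseq_def)
  note K = K0[rule_format]
  have b: "real (d+1) * y ^ d \<le> K + 1" for d
  proof -
    have "real (d+1) * y ^ d = of_nat d * y ^ d + y ^ d" by (simp add: algebra_simps)
    also have "\<dots> \<le> K + 1" using K[of d] y by (auto intro!: add_mono power_le_one simp: abs_le_iff)
    finally show ?thesis .
  qed
  have "real ((d+1)^n) * x ^ d \<le> (K + 1) ^ n" for d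
  proof -
    have "real ((d+1)^n) * x ^ d = (real (d+1) * y ^ d) ^ n"
      by (simp add: power_mult_distrib y(3)[symmetric] power_mult[symmetric] mult.commute)
    also have "\<dots> \<le> (K+1)^n" using b[of d] y by (intro power_mono) auto
    finally show ?thesis .
  qed
  then show ?thesis by blast
qed

lemma card_bound:
  assumes "0 < \<rho>" "\<rho> < \<rho>'"
  shows "\<exists>B\<ge>0. \<forall>d. sqrt (card (Md n d)) * \<rho> ^ d \<le> B * \<rho>' ^ d"
proof -
  obtain B where B: "\<And>d. real ((d+1)^n) * (\<rho>/\<rho>') ^ d \<le> B"
    using poly_bound[of "\<rho>/\<rho>'" n] assms by auto
  have "sqrt (card (Md n d)) * \<rho> ^ d \<le> B * \<rho>' ^ d" for d
  proof -
    have c: "sqrt (card (Md n d)) \<le> real ((d+1)^n)"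
    proof -
      have "sqrt (card (Md n d)) \<le> card (Md n d)"
      proof (cases "card (Md n d) = 0")
        case False
        then have "real (card (Md n d)) \<le> real (card (Md n d)) * real (card (Md n d))" by simp
        then have "sqrt (card (Md n d)) \<le> sqrt (real (card (Md n d)) * real (card (Md n d)))"
          by (rule real_sqrt_le_mono)
        then show ?thesis by simp
      qed simp
      also have "\<dots> \<le> real ((d+1)^n)" using card_Md[of n d] by linarith
      finally show ?thesis .
    qed
    have "sqrt (card (Md n d)) * \<rho> ^ d \<le> real ((d+1)^n) * \<rho> ^ d"
      using c assms by (intro mult_right_mono) auto
    also have "\<dots> = (real ((d+1)^n) * (\<rho>/\<rho>') ^ d) * \<rho>' ^ d"
      using assms by (simp add: power_divide)
    also have "\<dots> \<le> B * \<rho>' ^ d" using B[of d] assms by (intro mult_right_mono) auto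
    finally show ?thesis .
  qed
  moreover have "B \<ge> 0" using B[of 0] by simp
  ultimately show ?thesis by blast
qed

lemma wblock_nonneg: "wblock n f d \<ge> 0"
  by (simp add: wblock_def sum_nonneg)

lemma blk_nonneg: "blk n f k \<ge> 0"
  by (simp add: blk_def sum_nonneg)

lemma infsum_suminf_nonneg:
  fixes a :: "nat \<Rightarrow> real"
  assumes "\<And>d. a d \<ge> 0" "summable a"
  shows "infsum a UNIV = suminf a"
proof -
  have "a summable_on UNIV" using summable_on_UNIV_nonneg_real_iff[of a] assms by simp
  then have "(a has_sum infsum a UNIV) UNIV" by (rule has_sum_infsum)
  then have "a sums infsum a UNIV" by (rule has_sum_imp_sums)
  then show ?thesis by (simp add: sums_iff)
qed

lemma Fspace_summable:
  assumes "f \<in> Fspace n r" "0 < \<rho>" "ereal \<rho> < r"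
  shows "summable (\<lambda>d. wblock n f d * \<rho> ^ d)" "normF_bullet n f \<rho> = (\<Sum>d. wblock n f d * \<rho> ^ d)"
proof -
  have nn: "\<And>d. wblock n f d * \<rho> ^ d \<ge> 0" using assms by (simp add: wblock_nonneg)
  have "(\<lambda>d. wblock n f d * \<rho> ^ d) summable_on UNIV" using assms by (auto simp: Fspace_def)
  then show s: "summable (\<lambda>d. wblock n f d * \<rho> ^ d)" using summable_on_UNIV_nonneg_real_iff[of "\<lambda>d. wblock n f d * \<rho> ^ d"] nn by simp
  show "normF_bullet n f \<rho> = (\<Sum>d. wblock n f d * \<rho> ^ d)"
    unfolding normF_bullet_def by (rule infsum_suminf_nonneg[OF nn s])
qed

lemma Fspace_zero: "f \<in> Fspace n r \<Longrightarrow> \<alpha> \<notin> words n \<Longrightarrow> f \<alpha> = 0"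
  by (auto simp: Fspace_def)

lemma sum_Mle: "(\<Sum>k\<in>Mle n D. g k) = (\<Sum>d\<le>D. \<Sum>k\<in>Md n d. g k)"
proof -
  have "(\<Sum>k\<in>Mle n D. g k) = (\<Sum>d\<in>{..D}. \<Sum>k\<in>{k\<in>Mle n D. mabs n k = d}. g k)"
    by (rule sum.group[symmetric]) (use finite_Mle[of n D] in \<open>auto simp: Mle_def\<close>)
  also have "\<dots> = (\<Sum>d\<le>D. \<Sum>k\<in>Md n d. g k)"
    by (intro sum.cong refl arg_cong[where f = "\<lambda>A. sum g A"]) (auto simp: Mle_def Md_def)
  finally show ?thesis .
qed

lemma finite_sub_Mle:
  assumes "finite F" "F \<subseteq> mindex n"
  shows "F \<subseteq> Mle n (\<Sum>k\<in>F. mabs n k)"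
  using assms by (auto simp: Mle_def intro: member_le_sum)

lemma circ_bound:
  assumes r: "0 < \<rho>" and rp: "0 < \<rho>'" and B: "B \<ge> 0" "\<And>d. sqrt (card (Md n d)) * \<rho> ^ d \<le> B * \<rho>' ^ d"
    and s: "summable (\<lambda>d. wblock n f d * \<rho>' ^ d)"
  shows "(\<lambda>k. blk n f k * \<rho> ^ mabs n k) summable_on mindex n"
    "normF_circ n f \<rho> \<le> B * (\<Sum>d. wblock n f d * \<rho>' ^ d)"
proof -
  let ?g = "\<lambda>k. blk n f k * \<rho> ^ mabs n k"
  have nn: "\<And>k. ?g k \<ge> 0" using r by (simp add: blk_nonneg)
  have nn': "\<And>d. wblock n f d * \<rho>' ^ d \<ge> 0" using rp by (simp add: wblock_nonneg)
  have fin: "sum ?g F \<le> B * (\<Sum>d. wblock n f d * \<rho>' ^ d)" if "finite F" "F \<subseteq> mindex n" for F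
  proof -
    define D where "D = (\<Sum>k\<in>F. mabs n k)"
    have "sum ?g F \<le> sum ?g (Mle n D)"
      by (rule sum_mono2[OF finite_Mle]) (use finite_sub_Mle[OF that] nn in \<open>auto simp: D_def\<close>)
    also have "\<dots> = (\<Sum>d\<le>D. \<Sum>k\<in>Md n d. ?g k)" by (rule sum_Mle)
    also have "\<dots> = (\<Sum>d\<le>D. (\<Sum>k\<in>Md n d. blk n f k) * \<rho> ^ d)"
      by (intro sum.cong refl) (simp add: sum_distrib_right Md_def)
    also have "\<dots> \<le> (\<Sum>d\<le>D. B * (wblock n f d * \<rho>' ^ d))"
    proof (rule sum_mono)
      fix d
      have "(\<Sum>k\<in>Md n d. blk n f k) * \<rho> ^ d \<le> sqrt (card (Md n d)) * wblock n f d * \<rho> ^ d"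
        using sum_blk_Md[of n f d] r by (intro mult_right_mono) auto
      also have "\<dots> = (sqrt (card (Md n d)) * \<rho> ^ d) * wblock n f d" by simp
      also have "\<dots> \<le> (B * \<rho>' ^ d) * wblock n f d" using B(2)[of d] by (intro mult_right_mono) (auto simp: wblock_nonneg)
      finally show "(\<Sum>k\<in>Md n d. blk n f k) * \<rho> ^ d \<le> B * (wblock n f d * \<rho>' ^ d)" by (simp add: mult_ac)
    qed
    also have "\<dots> = B * (\<Sum>d\<le>D. wblock n f d * \<rho>' ^ d)" by (simp add: sum_distrib_left)
    also have "\<dots> \<le> B * (\<Sum>d. wblock n f d * \<rho>' ^ d)"
      using B(1) by (intro mult_left_mono sum_le_suminf[OF s]) (auto simp: nn')
    finally show ?thesis .
  qed
  show sm: "?g summable_on mindex n"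
  proof (rule nonneg_bdd_above_summable_on)
    show "bdd_above (sum ?g ` {F. F \<subseteq> mindex n \<and> finite F})"
      unfolding bdd_above_def using fin by blast
  qed (use nn in auto)
  show "normF_circ n f \<rho> \<le> B * (\<Sum>d. wblock n f d * \<rho>' ^ d)"
    unfolding normF_circ_blk by (rule infsum_le_finite_sums[OF sm fin])
qed

definition Wd :: "nat \<Rightarrow> nat \<Rightarrow> nat list set" where
  "Wd n d = {\<alpha> \<in> words n. length \<alpha> = d}"

lemma wblock_L2: "wblock n f d = L2_set (\<lambda>\<alpha>. cmod (f \<alpha>)) (Wd n d)"
  by (simp add: wblock_def L2_set_def Wd_def)

lemma finite_Wd: "finite (Wd n d)"
  using finite_words_len by (simp add: Wd_def)

lemma wblock_add: "wblock n (\<lambda>w. f w + g w) d \<le> wblock n f d + wblock n g d"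
proof -
  have "wblock n (\<lambda>w. f w + g w) d \<le> L2_set (\<lambda>\<alpha>. cmod (f \<alpha>) + cmod (g \<alpha>)) (Wd n d)"
    unfolding wblock_L2 by (rule L2_set_mono) (auto simp: norm_triangle_ineq)
  also have "\<dots> \<le> wblock n f d + wblock n g d"
    unfolding wblock_L2 by (rule L2_set_triangle_ineq)
  finally show ?thesis .
qed

lemma wblock_smult: "wblock n (\<lambda>w. c * f w) d = cmod c * wblock n f d"
  unfolding wblock_L2 by (simp add: L2_set_right_distrib norm_mult)

lemma Fspace_add:
  assumes "f \<in> Fspace n r" "g \<in> Fspace n r"
  shows "(\<lambda>w. f w + g w) \<in> Fspace n r"
  unfolding Fspace_def
proof (intro CollectI conjI allI impI)
  fix \<rho> :: real assume rho: "0 < \<rho> \<and> ereal \<rho> < r"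
  have sf: "(\<lambda>d. wblock n f d * \<rho> ^ d) summable_on UNIV" and sg: "(\<lambda>d. wblock n g d * \<rho> ^ d) summable_on UNIV"
    using assms rho by (auto simp: Fspace_def)
  show "(\<lambda>d. wblock n (\<lambda>w. f w + g w) d * \<rho> ^ d) summable_on UNIV"
  proof (rule summable_on_comparison_test[OF summable_on_add[OF sf sg]])
    fix d :: nat
    show "wblock n (\<lambda>w. f w + g w) d * \<rho> ^ d \<le> wblock n f d * \<rho> ^ d + wblock n g d * \<rho> ^ d"
      using wblock_add[of n f g d] rho by (simp add: distrib_right[symmetric] mult_right_mono)
    show "0 \<le> wblock n (\<lambda>w. f w + g w) d * \<rho> ^ d" using rho by (simp add: wblock_nonneg)
  qed
qed (use assms in \<open>auto simp: Fspace_def\<close>)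

lemma Fspace_smult:
  assumes "f \<in> Fspace n r"
  shows "(\<lambda>w. c * f w) \<in> Fspace n r"
  unfolding Fspace_def
proof (intro CollectI conjI allI impI)
  fix \<rho> :: real assume rho: "0 < \<rho> \<and> ereal \<rho> < r"
  have sf: "(\<lambda>d. wblock n f d * \<rho> ^ d) summable_on UNIV"
    using assms rho by (auto simp: Fspace_def)
  then show "(\<lambda>d. wblock n (\<lambda>w. c * f w) d * \<rho> ^ d) summable_on UNIV"
    unfolding wblock_smult mult.assoc by (rule summable_on_cmult_right)
qed (use assms in \<open>auto simp: Fspace_def\<close>)

lemma Fspace_diff:
  assumes "f \<in> Fspace n r" "g \<in> Fspace n r"
  shows "(\<lambda>w. f w - g w) \<in> Fspace n r"
  using Fspace_add[OF assms(1) Fspace_smult[OF assms(2), of "-1"]] by simp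

lemma L2_set_sum_le:
  "finite J \<Longrightarrow> L2_set (\<lambda>x. \<Sum>j\<in>J. h j x) A \<le> (\<Sum>j\<in>J. L2_set (h j) A)"
proof (induction J rule: finite_induct)
  case empty then show ?case by (simp add: L2_set_def)
next
  case (insert j J)
  have "L2_set (\<lambda>x. \<Sum>j\<in>insert j J. h j x) A = L2_set (\<lambda>x. h j x + (\<Sum>j\<in>J. h j x)) A"
    using insert by simp
  also have "\<dots> \<le> L2_set (h j) A + L2_set (\<lambda>x. \<Sum>j\<in>J. h j x) A" by (rule L2_set_triangle_ineq)
  also have "\<dots> \<le> L2_set (h j) A + (\<Sum>j\<in>J. L2_set (h j) A)" using insert by simp
  finally show ?case using insert by simp
qed

lemma bij_take_drop:
  assumes "j \<le> d"
  shows "bij_betw (\<lambda>\<alpha>. (take j \<alpha>, drop j \<alpha>)) (Wd n d) (Wd n j \<times> Wd n (d - j))"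
proof (rule bij_betwI[where g = "\<lambda>(\<beta>,\<gamma>). \<beta> @ \<gamma>"])
  show "(\<lambda>\<alpha>. (take j \<alpha>, drop j \<alpha>)) \<in> Wd n d \<rightarrow> Wd n j \<times> Wd n (d - j)"
  proof
    fix \<alpha> assume a: "\<alpha> \<in> Wd n d"
    then have "take j \<alpha> @ drop j \<alpha> \<in> words n" by (simp add: Wd_def)
    then show "(take j \<alpha>, drop j \<alpha>) \<in> Wd n j \<times> Wd n (d - j)"
      using a assms by (simp only: words_append) (auto simp: Wd_def)
  qed
  show "(\<lambda>(\<beta>,\<gamma>). \<beta> @ \<gamma>) \<in> Wd n j \<times> Wd n (d - j) \<rightarrow> Wd n d"
    using assms by (auto simp: Wd_def)
  show "\<And>x. x \<in> Wd n d \<Longrightarrow> (\<lambda>(\<beta>,\<gamma>). \<beta> @ \<gamma>) (take j x, drop j x) = x" by simp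
  show "\<And>y. y \<in> Wd n j \<times> Wd n (d - j) \<Longrightarrow> (\<lambda>\<alpha>. (take j \<alpha>, drop j \<alpha>)) ((\<lambda>(\<beta>,\<gamma>). \<beta> @ \<gamma>) y) = y"
    by (auto simp: Wd_def)
qed

lemma L2_prod:
  assumes "j \<le> d"
  shows "L2_set (\<lambda>\<alpha>. cmod (f (take j \<alpha>)) * cmod (g (drop j \<alpha>))) (Wd n d) = wblock n f j * wblock n g (d - j)"
proof -
  have "(\<Sum>\<alpha>\<in>Wd n d. (cmod (f (take j \<alpha>)) * cmod (g (drop j \<alpha>)))^2)
      = (\<Sum>x\<in>Wd n j \<times> Wd n (d - j). (cmod (f (fst x)))^2 * (cmod (g (snd x)))^2)"
    using sum.reindex_bij_betw[OF bij_take_drop[OF assms, of n], of "\<lambda>x. (cmod (f (fst x)))^2 * (cmod (g (snd x)))^2"]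
    by (simp add: power_mult_distrib)
  also have "\<dots> = (\<Sum>\<beta>\<in>Wd n j. (cmod (f \<beta>))^2) * (\<Sum>\<gamma>\<in>Wd n (d - j). (cmod (g \<gamma>))^2)"
    by (subst sum_product, subst sum.cartesian_product) (simp add: case_prod_unfold)
  finally show ?thesis
    by (simp add: L2_set_def wblock_L2 real_sqrt_mult)
qed

lemma wblock_mult: "wblock n (Fmult f g) d \<le> (\<Sum>j\<le>d. wblock n f j * wblock n g (d - j))"
proof -
  have "wblock n (Fmult f g) d \<le> L2_set (\<lambda>\<alpha>. \<Sum>j\<le>d. cmod (f (take j \<alpha>)) * cmod (g (drop j \<alpha>))) (Wd n d)"
    unfolding wblock_L2
  proof (rule L2_set_mono)
    fix \<alpha> assume "\<alpha> \<in> Wd n d"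
    then have "length \<alpha> = d" by (simp add: Wd_def)
    then show "cmod (Fmult f g \<alpha>) \<le> (\<Sum>j\<le>d. cmod (f (take j \<alpha>)) * cmod (g (drop j \<alpha>)))"
      unfolding Fmult_def by (metis (no_types, lifting) norm_mult norm_sum sum.cong)
  qed simp
  also have "\<dots> \<le> (\<Sum>j\<le>d. L2_set (\<lambda>\<alpha>. cmod (f (take j \<alpha>)) * cmod (g (drop j \<alpha>))) (Wd n d))"
    by (rule L2_set_sum_le) simp
  also have "\<dots> = (\<Sum>j\<le>d. wblock n f j * wblock n g (d - j))"
    by (intro sum.cong refl) (simp add: L2_prod)
  finally show ?thesis .
qed

lemma Fspace_mult:
  assumes f: "f \<in> Fspace n r" and g: "g \<in> Fspace n r"
  shows "Fmult f g \<in> Fspace n r"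
  unfolding Fspace_def
proof (intro CollectI conjI allI impI)
  fix \<alpha> :: "nat list" assume a: "\<alpha> \<notin> words n"
  have z: "f (take j \<alpha>) * g (drop j \<alpha>) = 0" for j
  proof -
    have "take j \<alpha> \<notin> words n \<or> drop j \<alpha> \<notin> words n"
      using a words_append[of "take j \<alpha>" "drop j \<alpha>" n] by auto
    then show ?thesis using f g by (auto simp: Fspace_def)
  qed
  show "Fmult f g \<alpha> = 0" unfolding Fmult_def by (rule sum.neutral) (use z in auto)
next
  fix \<rho> :: real assume rho: "0 < \<rho> \<and> ereal \<rho> < r"
  let ?a = "\<lambda>j. wblock n f j * \<rho> ^ j" and ?b = "\<lambda>j. wblock n g j * \<rho> ^ j"
  have sa: "summable ?a" and sb: "summable ?b" using Fspace_summable f g rho by auto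
  have na: "summable (\<lambda>j. norm (?a j))" using sa rho by (simp add: wblock_nonneg)
  have nb: "summable (\<lambda>j. norm (?b j))" using sb rho by (simp add: wblock_nonneg)
  have sc: "summable (\<lambda>d. \<Sum>j\<le>d. ?a j * ?b (d - j))" by (rule summable_Cauchy_product[OF na nb])
  have "summable (\<lambda>d. wblock n (Fmult f g) d * \<rho> ^ d)"
  proof (rule summable_comparison_test'[OF sc])
    fix d :: nat
    have "norm (wblock n (Fmult f g) d * \<rho> ^ d) = wblock n (Fmult f g) d * \<rho> ^ d"
      using rho by (simp add: wblock_nonneg)
    also have "\<dots> \<le> (\<Sum>j\<le>d. wblock n f j * wblock n g (d - j)) * \<rho> ^ d"
      using wblock_mult rho by (intro mult_right_mono) auto
    also have "\<dots> = (\<Sum>j\<le>d. ?a j * ?b (d - j))"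
      unfolding sum_distrib_right
      by (intro sum.cong refl) (simp add: power_add[symmetric] mult_ac)
    finally show "norm (wblock n (Fmult f g) d * \<rho> ^ d) \<le> (\<Sum>j\<le>d. ?a j * ?b (d - j))" .
  qed
  then show "(\<lambda>d. wblock n (Fmult f g) d * \<rho> ^ d) summable_on UNIV"
    using summable_on_UNIV_nonneg_real_iff[of "\<lambda>d. wblock n (Fmult f g) d * \<rho> ^ d"] rho
    by (simp add: wblock_nonneg)
qed

lemma rho_between:
  assumes "0 < \<rho>" "ereal \<rho> < r"
  obtains \<rho>' where "\<rho> < \<rho>'" "ereal \<rho>' < r"
proof -
  obtain z where "ereal \<rho> < ereal z" "ereal z < r" using ereal_dense2[OF assms(2)] by blast
  then show ?thesis using that by auto
qed

lemma circ_le_bullet: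
  assumes "0 < \<rho>" "ereal \<rho> < r"
  shows "\<exists>\<rho>' B. \<rho> < \<rho>' \<and> 0 < \<rho>' \<and> ereal \<rho>' < r \<and> B \<ge> 0 \<and>
     (\<forall>f\<in>Fspace n r. (\<lambda>k. blk n f k * \<rho> ^ mabs n k) summable_on mindex n \<and>
          normF_circ n f \<rho> \<le> B * normF_bullet n f \<rho>')"
proof -
  obtain \<rho>' where r1: "\<rho> < \<rho>'" "ereal \<rho>' < r" using rho_between assms by blast
  obtain B where B: "B \<ge> 0" "\<And>d. sqrt (card (Md n d)) * \<rho> ^ d \<le> B * \<rho>' ^ d"
    using card_bound[OF assms(1) r1(1), of n] by blast
  have rp: "0 < \<rho>'" using r1 assms by simp
  have "\<forall>f\<in>Fspace n r. (\<lambda>k. blk n f k * \<rho> ^ mabs n k) summable_on mindex n \<and>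
          normF_circ n f \<rho> \<le> B * normF_bullet n f \<rho>'"
  proof
    fix f assume f: "f \<in> Fspace n r"
    have s: "summable (\<lambda>d. wblock n f d * \<rho>' ^ d)" using Fspace_summable(1)[OF f rp r1(2)] .
    show "(\<lambda>k. blk n f k * \<rho> ^ mabs n k) summable_on mindex n \<and> normF_circ n f \<rho> \<le> B * normF_bullet n f \<rho>'"
      using circ_bound[OF assms(1) rp B s] Fspace_summable(2)[OF f rp r1(2)] by simp
  qed
  then show ?thesis using rp r1 B by blast
qed

lemma blk_summable:
  assumes "f \<in> Fspace n r" "0 < \<rho>" "ereal \<rho> < r"
  shows "(\<lambda>k. blk n f k * \<rho> ^ mabs n k) summable_on mindex n"
  using circ_le_bullet[OF assms(2,3), of n] assms(1) by blast

lemma normB_term_le: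
  assumes "q \<noteq> 0" "0 < \<rho>"
  shows "cmod (piF n q f k) * Bterm n q k * \<rho> ^ mabs n k \<le> blk n f k * \<rho> ^ mabs n k"
  using piF_bound[OF assms(1)] assms(2) by (intro mult_right_mono) auto

lemma piF_Oq:
  assumes q: "q \<noteq> 0" and f: "f \<in> Fspace n r"
  shows "piF n q f \<in> Oq n q r"
  unfolding Oq_def
proof (intro CollectI conjI allI impI)
  fix k assume "k \<notin> mindex n" then show "piF n q f k = 0" by (simp add: piF_def Aset_empty)
next
  fix \<rho> :: real assume rho: "0 < \<rho> \<and> ereal \<rho> < r"
  show "(\<lambda>k. cmod (piF n q f k) * Bterm n q k * \<rho> ^ mabs n k) summable_on mindex n"
  proof (rule summable_on_comparison_test[OF blk_summable[OF f]])
    show "\<And>k. cmod (piF n q f k) * Bterm n q k * \<rho> ^ mabs n k \<le> blk n f k * \<rho> ^ mabs n k"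
      using normB_term_le[OF q] rho by blast
    show "\<And>k. 0 \<le> cmod (piF n q f k) * Bterm n q k * \<rho> ^ mabs n k"
      using rho Bterm_nonneg by simp
  qed (use rho in auto)
qed

lemma normB_le_circ:
  assumes q: "q \<noteq> 0" and f: "f \<in> Fspace n r" and rho: "0 < \<rho>" "ereal \<rho> < r"
  shows "normB n q (piF n q f) \<rho> \<le> normF_circ n f \<rho>"
  unfolding normB_def normF_circ_blk
proof (rule infsum_mono)
  show "(\<lambda>k. cmod (piF n q f k) * Bterm n q k * \<rho> ^ mabs n k) summable_on mindex n"
    using piF_Oq[OF q f] rho by (auto simp: Oq_def)
  show "(\<lambda>k. blk n f k * \<rho> ^ mabs n k) summable_on mindex n" by (rule blk_summable[OF f rho])
  show "\<And>k. k \<in> mindex n \<Longrightarrow> cmod (piF n q f k) * Bterm n q k * \<rho> ^ mabs n k \<le> blk n f k * \<rho> ^ mabs n k"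
    using normB_term_le[OF q rho(1)] by blast
qed

lemma Oq_zero: "a \<in> Oq n q r \<Longrightarrow> k \<notin> mindex n \<Longrightarrow> a k = 0"
  by (auto simp: Oq_def)

lemma circ_sec:
  assumes q: "q \<noteq> 0"
  shows "normF_circ n (sec n q a) \<rho> = normB n q a \<rho>"
  unfolding normF_circ_blk normB_def
  by (intro infsum_cong) (simp add: blk_sec[OF q])

lemma sec_Fspace:
  assumes q: "q \<noteq> 0" and a: "a \<in> Oq n q r"
  shows "sec n q a \<in> Fspace n r"
  unfolding Fspace_def
proof (intro CollectI conjI allI impI)
  fix \<alpha> assume "\<alpha> \<notin> words n" then show "sec n q a \<alpha> = 0" by (simp add: sec_def)
next
  fix \<rho> :: real assume rho: "0 < \<rho> \<and> ereal \<rho> < r"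
  let ?g = "\<lambda>k. cmod (a k) * Bterm n q k * \<rho> ^ mabs n k"
  have sg: "?g summable_on mindex n" using a rho by (auto simp: Oq_def)
  have gnn: "\<And>k. ?g k \<ge> 0" using rho Bterm_nonneg by simp
  have "summable (\<lambda>d. wblock n (sec n q a) d * \<rho> ^ d)"
  proof (rule bounded_imp_summable)
    show "\<And>d. 0 \<le> wblock n (sec n q a) d * \<rho> ^ d" using rho by (simp add: wblock_nonneg)
    fix D
    have "(\<Sum>d\<le>D. wblock n (sec n q a) d * \<rho> ^ d) \<le> (\<Sum>d\<le>D. \<Sum>k\<in>Md n d. ?g k)"
    proof (rule sum_mono)
      fix d
      have "wblock n (sec n q a) d * \<rho> ^ d \<le> (\<Sum>k\<in>Md n d. blk n (sec n q a) k) * \<rho> ^ d"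
        using wblock_le_Md rho by (intro mult_right_mono) auto
      also have "\<dots> = (\<Sum>k\<in>Md n d. ?g k)"
        unfolding sum_distrib_right by (intro sum.cong refl) (auto simp: Md_def blk_sec[OF q])
      finally show "wblock n (sec n q a) d * \<rho> ^ d \<le> (\<Sum>k\<in>Md n d. ?g k)" .
    qed
    also have "\<dots> = (\<Sum>k\<in>Mle n D. ?g k)" by (rule sum_Mle[symmetric])
    also have "\<dots> \<le> infsum ?g (mindex n)"
      by (rule finite_sum_le_infsum[OF sg finite_Mle]) (auto simp: Mle_def gnn)
    finally show "(\<Sum>d\<le>D. wblock n (sec n q a) d * \<rho> ^ d) \<le> infsum ?g (mindex n)" .
  qed
  then show "(\<lambda>d. wblock n (sec n q a) d * \<rho> ^ d) summable_on UNIV"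
    using summable_on_UNIV_nonneg_real_iff[of "\<lambda>d. wblock n (sec n q a) d * \<rho> ^ d"] rho
    by (simp add: wblock_nonneg)
qed

lemma piF_add: "piF n q (\<lambda>w. f w + g w) = (\<lambda>k. piF n q f k + piF n q g k)"
  by (auto simp: piF_def sum.distrib algebra_simps)

lemma piF_smult: "piF n q (\<lambda>w. c * f w) = (\<lambda>k. c * piF n q f k)"
  by (auto simp: piF_def sum_distrib_left algebra_simps)

lemma piF_diff: "piF n q (\<lambda>w. f w - c * g w) = (\<lambda>k. piF n q f k - c * piF n q g k)"
  by (auto simp: piF_def sum_subtractf sum_distrib_left algebra_simps)

lemma piF_wd: "piF n q (wd u) = (\<lambda>k. if u \<in> words n \<and> pvec u = k then wt q u else 0)"
proof
  fix k
  have "piF n q (wd u) k = (\<Sum>\<alpha>\<in>Aset n k. if \<alpha> = u then wt q u else 0)"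
    unfolding piF_def wd_def by (intro sum.cong refl) auto
  also have "\<dots> = (if u \<in> Aset n k then wt q u else 0)"
    by (simp add: sum.delta')
  finally show "piF n q (wd u) k = (if u \<in> words n \<and> pvec u = k then wt q u else 0)"
    by (simp add: Aset_def)
qed

lemma sec_add: "sec n q (\<lambda>k. a k + b k) = (\<lambda>\<alpha>. sec n q a \<alpha> + sec n q b \<alpha>)"
  by (auto simp: sec_def add_divide_distrib algebra_simps)

lemma sec_smult: "sec n q (\<lambda>k. c * a k) = (\<lambda>\<alpha>. c * sec n q a \<alpha>)"
  by (auto simp: sec_def)

lemma sec_zero: "sec n q (\<lambda>_. 0) = (\<lambda>_. 0)"
  by (auto simp: sec_def)

lemma bullet_le_circ:
  assumes h: "h \<in> Fspace n r" and rho: "0 < \<rho>" "ereal \<rho> < r"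
  shows "normF_bullet n h \<rho> \<le> normF_circ n h \<rho>"
proof -
  let ?g = "\<lambda>k. blk n h k * \<rho> ^ mabs n k"
  have sg: "?g summable_on mindex n" by (rule blk_summable[OF h rho])
  have gnn: "\<And>k. ?g k \<ge> 0" using rho by (simp add: blk_nonneg)
  have "(\<Sum>d. wblock n h d * \<rho> ^ d) \<le> infsum ?g (mindex n)"
  proof (rule suminf_le_const)
    show "summable (\<lambda>d. wblock n h d * \<rho> ^ d)" using Fspace_summable(1)[OF h rho] .
    fix D
    have "(\<Sum>d<D. wblock n h d * \<rho> ^ d) \<le> (\<Sum>d\<le>D. wblock n h d * \<rho> ^ d)"
      by (rule sum_mono2) (use rho in \<open>auto simp: wblock_nonneg\<close>)
    also have "\<dots> \<le> (\<Sum>d\<le>D. \<Sum>k\<in>Md n d. ?g k)"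
    proof (rule sum_mono)
      fix d
      have "wblock n h d * \<rho> ^ d \<le> (\<Sum>k\<in>Md n d. blk n h k) * \<rho> ^ d"
        using wblock_le_Md rho by (intro mult_right_mono) auto
      also have "\<dots> = (\<Sum>k\<in>Md n d. ?g k)"
        unfolding sum_distrib_right by (intro sum.cong refl) (auto simp: Md_def)
      finally show "wblock n h d * \<rho> ^ d \<le> (\<Sum>k\<in>Md n d. ?g k)" .
    qed
    also have "\<dots> = (\<Sum>k\<in>Mle n D. ?g k)" by (rule sum_Mle[symmetric])
    also have "\<dots> \<le> infsum ?g (mindex n)"
      by (rule finite_sum_le_infsum[OF sg finite_Mle]) (auto simp: Mle_def gnn)
    finally show "(\<Sum>d<D. wblock n h d * \<rho> ^ d) \<le> infsum ?g (mindex n)" .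
  qed
  then show ?thesis using Fspace_summable(2)[OF h rho] by (simp add: normF_circ_blk)
qed

lemma bullet_mono:
  assumes h: "h \<in> Fspace n r" and rho: "0 < \<rho>" "\<rho> \<le> \<rho>'" "ereal \<rho>' < r"
  shows "normF_bullet n h \<rho> \<le> normF_bullet n h \<rho>'"
proof -
  have r2: "ereal \<rho> < r" using rho by (meson ereal_less_eq(3) le_less_trans)
  have "(\<Sum>d. wblock n h d * \<rho> ^ d) \<le> (\<Sum>d. wblock n h d * \<rho>' ^ d)"
    using Fspace_summable(1)[OF h rho(1) r2] Fspace_summable(1)[OF h _ rho(3)] rho
    by (intro suminf_le) (auto intro!: mult_left_mono power_mono simp: wblock_nonneg)
  then show ?thesis using Fspace_summable(2)[OF h rho(1) r2] Fspace_summable(2)[OF h _ rho(3)] rho by simp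
qed

lemma bullet_diff:
  assumes f: "f \<in> Fspace n r" and g: "g \<in> Fspace n r" and rho: "0 < \<rho>" "ereal \<rho> < r"
  shows "normF_bullet n (\<lambda>w. f w - g w) \<rho> \<le> normF_bullet n f \<rho> + normF_bullet n g \<rho>"
proof -
  have fg: "(\<lambda>w. f w - g w) \<in> Fspace n r" by (rule Fspace_diff[OF f g])
  have wb: "wblock n (\<lambda>w. f w - g w) d \<le> wblock n f d + wblock n g d" for d
    using wblock_add[of n f "\<lambda>w. (-1) * g w" d] wblock_smult[of n "-1" g d] by simp
  have "(\<Sum>d. wblock n (\<lambda>w. f w - g w) d * \<rho> ^ d) \<le> (\<Sum>d. wblock n f d * \<rho> ^ d + wblock n g d * \<rho> ^ d)"
  proof (rule suminf_le)
    show "summable (\<lambda>d. wblock n f d * \<rho> ^ d + wblock n g d * \<rho> ^ d)"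
      using Fspace_summable(1)[OF f rho] Fspace_summable(1)[OF g rho] by (rule summable_add)
    fix d show "wblock n (\<lambda>w. f w - g w) d * \<rho> ^ d \<le> wblock n f d * \<rho> ^ d + wblock n g d * \<rho> ^ d"
      using wb[of d] rho by (simp add: distrib_right[symmetric] mult_right_mono)
  qed (use Fspace_summable(1)[OF fg rho] in simp)
  also have "\<dots> = (\<Sum>d. wblock n f d * \<rho> ^ d) + (\<Sum>d. wblock n g d * \<rho> ^ d)"
    using Fspace_summable(1)[OF f rho] Fspace_summable(1)[OF g rho] by (rule suminf_add[symmetric])
  finally show ?thesis
    using Fspace_summable(2)[OF fg rho] Fspace_summable(2)[OF f rho] Fspace_summable(2)[OF g rho] by simp
qed

lemma coeff_le_bullet:
  assumes h: "h \<in> Fspace n r" and rho: "0 < \<rho>" "ereal \<rho> < r"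
  shows "blk n h k * \<rho> ^ mabs n k \<le> normF_bullet n h \<rho>"
proof -
  have "blk n h k \<le> wblock n h (mabs n k)"
  proof -
    have "(\<Sum>\<alpha>\<in>Aset n k. (cmod (h \<alpha>))^2) \<le> (\<Sum>\<alpha>\<in>{\<alpha>\<in>words n. length \<alpha> = mabs n k}. (cmod (h \<alpha>))^2)"
      by (rule sum_mono2[OF finite_words_len Aset_sub]) simp
    then show ?thesis unfolding blk_def wblock_def by (rule real_sqrt_le_mono)
  qed
  then have "blk n h k * \<rho> ^ mabs n k \<le> wblock n h (mabs n k) * \<rho> ^ mabs n k"
    using rho by (intro mult_right_mono) auto
  also have "\<dots> \<le> (\<Sum>d. wblock n h d * \<rho> ^ d)"
    using sum_le_suminf[OF Fspace_summable(1)[OF h rho], of "{mabs n k}"] rho by (simp add: wblock_nonneg)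
  finally show ?thesis using Fspace_summable(2)[OF h rho] by simp
qed

definition trunc :: "nat \<Rightarrow> (nat list \<Rightarrow> complex) \<Rightarrow> nat list \<Rightarrow> complex" where
  "trunc N f = (\<lambda>w. if length w \<le> N then f w else 0)"

lemma pvec_mset: "pvec \<alpha> = pvec \<beta> \<longleftrightarrow> mset \<alpha> = mset \<beta>"
  by (auto simp: pvec_def fun_eq_iff multiset_eq_iff count_mset)

lemma sort_eq_mset: "mset \<alpha> = mset \<beta> \<Longrightarrow> sort \<alpha> = sort \<beta>"
  by (metis sorted_list_of_multiset_mset)

lemma trunc_Fspace: "f \<in> Fspace n r \<Longrightarrow> trunc N f \<in> Fspace n r"
  by (rule fin_Fspace[of _ _ N]) (auto simp: trunc_def Fspace_def)

lemma (in ideal_ctx) trunc_in: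
  assumes f: "f \<in> Fspace n r" and ker: "piF n q f = (\<lambda>_. 0)"
  shows "trunc N f \<in> I"
proof -
  let ?W = "{\<alpha>\<in>words n. length \<alpha> \<le> N}"
  have finW: "finite ?W" by (rule finite_words_le)
  have inI: "(\<lambda>w. \<Sum>\<alpha>\<in>?W. f \<alpha> * (wd \<alpha> w - wt q \<alpha> * wd (sort \<alpha>) w)) \<in> I"
    by (rule I_sum[OF finW]) (use sort_in I_smult in blast)
  have eq: "(\<Sum>\<alpha>\<in>?W. f \<alpha> * (wd \<alpha> w - wt q \<alpha> * wd (sort \<alpha>) w)) = trunc N f w" for w
  proof -
    have s1: "(\<Sum>\<alpha>\<in>?W. f \<alpha> * wd \<alpha> w) = trunc N f w"
    proof -
      have "(\<Sum>\<alpha>\<in>?W. f \<alpha> * wd \<alpha> w) = (\<Sum>\<alpha>\<in>?W. if w = \<alpha> then f w else 0)"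
        by (intro sum.cong refl) (auto simp: wd_def)
      also have "\<dots> = (if w \<in> ?W then f w else 0)" using finW by (simp add: sum.delta)
      also have "\<dots> = trunc N f w" using f by (auto simp: trunc_def Fspace_def)
      finally show ?thesis .
    qed
    have s2: "(\<Sum>\<alpha>\<in>?W. f \<alpha> * (wt q \<alpha> * wd (sort \<alpha>) w)) = 0"
    proof -
      have "(\<Sum>\<alpha>\<in>?W. f \<alpha> * (wt q \<alpha> * wd (sort \<alpha>) w)) = (\<Sum>\<alpha>\<in>{\<alpha>\<in>?W. sort \<alpha> = w}. f \<alpha> * wt q \<alpha>)"
        using finW by (simp add: wd_def sum.inter_filter[symmetric] eq_commute if_distrib cong: if_cong)
      also have "\<dots> = 0"
      proof (cases "\<exists>\<alpha>0\<in>?W. sort \<alpha>0 = w")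
        case False
        then have "{\<alpha>\<in>?W. sort \<alpha> = w} = {}" by auto
        then show ?thesis by (simp only: sum.empty)
      next
        case True
        then obtain \<alpha>0 where a0: "\<alpha>0 \<in> ?W" "sort \<alpha>0 = w" by blast
        have "{\<alpha>\<in>?W. sort \<alpha> = w} = Aset n (pvec \<alpha>0)"
        proof (rule set_eqI)
          fix \<alpha>
          show "\<alpha> \<in> {\<alpha>\<in>?W. sort \<alpha> = w} \<longleftrightarrow> \<alpha> \<in> Aset n (pvec \<alpha>0)"
          proof
            assume "\<alpha> \<in> {\<alpha>\<in>?W. sort \<alpha> = w}"
            then have "\<alpha> \<in> words n" "mset (sort \<alpha>) = mset (sort \<alpha>0)" using a0 by auto
            then show "\<alpha> \<in> Aset n (pvec \<alpha>0)" by (simp add: Aset_def pvec_mset)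
          next
            assume "\<alpha> \<in> Aset n (pvec \<alpha>0)"
            then have a: "\<alpha> \<in> words n" "mset \<alpha> = mset \<alpha>0" by (auto simp: Aset_def pvec_mset)
            then have "length \<alpha> = length \<alpha>0" by (metis size_mset)
            then show "\<alpha> \<in> {\<alpha>\<in>?W. sort \<alpha> = w}" using a a0 sort_eq_mset[OF a(2)] by auto
          qed
        qed
        then show ?thesis using fun_cong[OF ker, of "pvec \<alpha>0"] by (simp add: piF_def)
      qed
      finally show ?thesis .
    qed
    show ?thesis using s1 s2 by (simp add: right_diff_distrib sum_subtractf)
  qed
  show ?thesis using inI unfolding eq by simp
qed

lemma wblock_tail:
  "wblock n (\<lambda>w. f w - trunc N f w) d = (if d \<le> N then 0 else wblock n f d)"
  unfolding wblock_def trunc_def by (auto intro!: arg_cong[where f = sqrt] sum.neutral)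

lemma tail_small:
  assumes f: "f \<in> Fspace n r" and rho: "0 < \<rho>" "ereal \<rho> < r" and e: "\<epsilon> > 0"
  shows "\<exists>N. normF_bullet n (\<lambda>w. f w - trunc N f w) \<rho> < \<epsilon>"
proof -
  let ?a = "\<lambda>d. wblock n f d * \<rho> ^ d"
  have sa: "summable ?a" by (rule Fspace_summable(1)[OF f rho])
  obtain N where N: "\<And>m. m \<ge> N \<Longrightarrow> norm (\<Sum>i. ?a (i + m)) < \<epsilon>"
    using suminf_exist_split[OF e sa] by blast
  let ?h = "\<lambda>d. if d \<le> N then 0 else ?a d"
  have fg: "(\<lambda>w. f w - trunc N f w) \<in> Fspace n r" by (rule Fspace_diff[OF f trunc_Fspace[OF f]])
  have "normF_bullet n (\<lambda>w. f w - trunc N f w) \<rho> = (\<Sum>d. wblock n (\<lambda>w. f w - trunc N f w) d * \<rho> ^ d)"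
    by (rule Fspace_summable(2)[OF fg rho])
  also have "\<dots> = suminf ?h" by (intro arg_cong[where f = suminf] ext) (simp add: wblock_tail)
  also have "\<dots> = (\<Sum>i. ?h (i + Suc N)) + (\<Sum>i<Suc N. ?h i)"
  proof (rule suminf_split_initial_segment)
    show "summable ?h"
      by (rule summable_comparison_test'[OF sa]) (use rho in \<open>auto simp: wblock_nonneg\<close>)
  qed
  also have "\<dots> = (\<Sum>i. ?a (i + Suc N))" by simp
  also have "\<dots> < \<epsilon>" using N[of "Suc N"] by simp
  finally show ?thesis by blast
qed

abbreviation Gset :: "complex \<Rightarrow> nat \<Rightarrow> (nat list \<Rightarrow> complex) set" where
  "Gset q n \<equiv> {qcomm q i j | i j. 1 \<le> i \<and> i < j \<and> j \<le> n}"

lemma Fspace_lin: "f \<in> Fspace n r \<Longrightarrow> g \<in> Fspace n r \<Longrightarrow> (\<lambda>w. f w - c * g w) \<in> Fspace n r"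
  using Fspace_diff[of f n r "\<lambda>w. c * g w"] Fspace_smult[of g n r c] by simp

lemma zero_Fspace: "(\<lambda>_. 0) \<in> Fspace n r"
  by (rule fin_Fspace[of _ _ 0]) auto

lemma piF_zero: "piF n q (\<lambda>_. 0) = (\<lambda>_. 0)"
  by (simp add: piF_def)

lemma Oqmult_zero2: "Oqmult n q a (\<lambda>_. 0) = (\<lambda>_. 0)"
  by (rule ext) (simp add: Oqmult_def)

lemma Oqmult_zero1: "Oqmult n q (\<lambda>_. 0) b = (\<lambda>_. 0)"
  by (rule ext) (simp add: Oqmult_def)

lemma Nk_nonneg: "Nk n q k \<ge> 0"
  by (simp add: Nk_def sum_nonneg)

lemma qcomm_ker:
  assumes q: "q \<noteq> 0" and ij: "1 \<le> i" "i < j" "j \<le> n"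
  shows "qcomm q i j \<in> Fspace n r" "piF n q (qcomm q i j) = (\<lambda>_. 0)"
proof -
  have w: "[i,j] \<in> words n" "[j,i] \<in> words n" using ij by auto
  show "qcomm q i j \<in> Fspace n r" unfolding qcomm_wd by (rule Fspace_lin[OF wd_Fspace[OF w(1)] wd_Fspace[OF w(2)]])
  have pv: "pvec [j,i] = pvec [i,j]" by (auto simp: pvec_def)
  have wt1: "wt q [i,j] = 1" using ij by (simp add: wt_def)
  have wt2: "wt q [j,i] = inverse q" using ij by (simp add: wt_def)
  show "piF n q (qcomm q i j) = (\<lambda>_. 0)"
    unfolding qcomm_wd piF_diff piF_wd using w pv wt1 wt2 q by (auto simp: fun_eq_iff)
qed

lemma ker_ideal:
  assumes q: "q \<noteq> 0"
  shows "two_sided_ideal n r {f \<in> Fspace n r. piF n q f = (\<lambda>_. 0)}"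
proof -
  let ?K = "{f \<in> Fspace n r. piF n q f = (\<lambda>_. 0)}"
  have 1: "(\<lambda>_. 0) \<in> ?K" using zero_Fspace piF_zero by auto
  have 2: "\<forall>f\<in>?K. \<forall>g\<in>?K. (\<lambda>w. f w + g w) \<in> ?K"
  proof (intro ballI)
    fix f g assume f: "f \<in> ?K" and g: "g \<in> ?K"
    show "(\<lambda>w. f w + g w) \<in> ?K" using f g Fspace_add[of f n r g] by (simp add: piF_add)
  qed
  have 3: "\<forall>f\<in>?K. \<forall>c. (\<lambda>w. c * f w) \<in> ?K"
  proof (intro ballI allI)
    fix f c assume f: "f \<in> ?K"
    show "(\<lambda>w. c * f w) \<in> ?K" using f Fspace_smult[of f n r c] by (simp add: piF_smult)
  qed
  have 4: "\<forall>a\<in>Fspace n r. \<forall>f\<in>?K. Fmult a f \<in> ?K \<and> Fmult f a \<in> ?K"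
  proof (intro ballI)
    fix a f assume a: "a \<in> Fspace n r" and f: "f \<in> ?K"
    show "Fmult a f \<in> ?K \<and> Fmult f a \<in> ?K"
      using a f Fspace_mult[of a n r f] Fspace_mult[of f n r a] piF_mult[of a n r f q] piF_mult[of f n r a q]
      by (simp add: Oqmult_zero1 Oqmult_zero2)
  qed
  show ?thesis unfolding two_sided_ideal_def using 1 2 3 4 by blast
qed

lemma ideal_gen_ker:
  assumes q: "q \<noteq> 0"
  shows "ideal_gen n r (Gset q n) \<subseteq> {f \<in> Fspace n r. piF n q f = (\<lambda>_. 0)}"
proof -
  have "Gset q n \<subseteq> {f \<in> Fspace n r. piF n q f = (\<lambda>_. 0)}" using qcomm_ker[OF q] by blast
  then show ?thesis using ker_ideal[OF q, of n r] unfolding ideal_gen_def by blast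
qed

lemma piF_coeff_bound:
  assumes q: "q \<noteq> 0" and h: "h \<in> Fspace n r" and rho: "0 < \<rho>" "ereal \<rho> < r" and k: "k \<in> mindex n"
  shows "cmod (piF n q h k) * \<rho> ^ mabs n k \<le> sqrt (Nk n q k) * normF_bullet n h \<rho>"
proof -
  have B: "Bterm n q k * sqrt (Nk n q k) = 1" "Nk n q k > 0" using Bterm_Nk[OF q k] by auto
  have "cmod (piF n q h k) = (cmod (piF n q h k) * Bterm n q k) * sqrt (Nk n q k)"
    using B by (simp add: mult.assoc)
  also have "\<dots> \<le> blk n h k * sqrt (Nk n q k)"
    by (rule mult_right_mono[OF piF_bound[OF q]]) (simp add: Nk_nonneg)
  finally have "cmod (piF n q h k) * \<rho> ^ mabs n k \<le> sqrt (Nk n q k) * (blk n h k * \<rho> ^ mabs n k)"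
    using rho by (simp add: mult_right_mono mult_ac)
  also have "\<dots> \<le> sqrt (Nk n q k) * normF_bullet n h \<rho>"
    by (rule mult_left_mono[OF coeff_le_bullet[OF h rho]]) (simp add: Nk_nonneg)
  finally show ?thesis .
qed

lemma closure_ker:
  assumes q: "q \<noteq> 0" and r: "0 < r"
  shows "Fclosure n r (ideal_gen n r (Gset q n)) \<subseteq> {f \<in> Fspace n r. piF n q f = (\<lambda>_. 0)}"
proof
  fix f assume f: "f \<in> Fclosure n r (ideal_gen n r (Gset q n))"
  then have fF: "f \<in> Fspace n r" by (simp add: Fclosure_def)
  obtain \<rho> where rho: "0 < \<rho>" "ereal \<rho> < r"
    using ereal_dense2[of 0 r] r by (auto simp: zero_ereal_def)
  have "piF n q f k = 0" for k
  proof (cases "k \<in> mindex n")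
    case False then show ?thesis by (simp add: piF_def Aset_empty)
  next
    case True
    define M where "M = sqrt (Nk n q k) / \<rho> ^ mabs n k"
    have Mpos: "M > 0" using Bterm_Nk[OF q True] rho by (simp add: M_def)
    show ?thesis
    proof (rule ccontr)
      assume ne: "piF n q f k \<noteq> 0"
      define \<epsilon> where "\<epsilon> = cmod (piF n q f k) / (2 * M)"
      have e: "\<epsilon> > 0" using ne Mpos by (simp add: \<epsilon>_def)
      obtain g where g: "g \<in> ideal_gen n r (Gset q n)" "normF_bullet n (\<lambda>w. f w - g w) \<rho> < \<epsilon>"
        using f rho e unfolding Fclosure_def by blast
      have gk: "g \<in> Fspace n r" "piF n q g = (\<lambda>_. 0)" using g(1) ideal_gen_ker[OF q] by auto
      have fg: "(\<lambda>w. f w - g w) \<in> Fspace n r" by (rule Fspace_diff[OF fF gk(1)])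
      have "piF n q (\<lambda>w. f w - g w) k = piF n q f k"
        using piF_diff[of n q f 1 g] gk(2) by (simp add: fun_eq_iff)
      then have "cmod (piF n q f k) * \<rho> ^ mabs n k \<le> sqrt (Nk n q k) * normF_bullet n (\<lambda>w. f w - g w) \<rho>"
        using piF_coeff_bound[OF q fg rho True] by simp
      also have "\<dots> \<le> sqrt (Nk n q k) * \<epsilon>" using g(2) by (intro mult_left_mono) (auto simp: Nk_nonneg)
      finally have "cmod (piF n q f k) \<le> M * \<epsilon>" using rho by (simp add: M_def field_simps)
      also have "M * \<epsilon> = cmod (piF n q f k) / 2" using Mpos by (simp add: \<epsilon>_def)
      finally show False using ne by simp
    qed
  qed
  then show "f \<in> {f \<in> Fspace n r. piF n q f = (\<lambda>_. 0)}" using fF by auto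
qed

lemma ker_closure:
  assumes q: "q \<noteq> 0"
  shows "{f \<in> Fspace n r. piF n q f = (\<lambda>_. 0)} \<subseteq> Fclosure n r (ideal_gen n r (Gset q n))"
proof
  fix f assume f: "f \<in> {f \<in> Fspace n r. piF n q f = (\<lambda>_. 0)}"
  then have fF: "f \<in> Fspace n r" and fk: "piF n q f = (\<lambda>_. 0)" by auto
  have ig: "trunc N f \<in> ideal_gen n r (Gset q n)" for N
    unfolding ideal_gen_def
  proof (intro CollectI conjI allI impI)
    show "trunc N f \<in> Fspace n r" by (rule trunc_Fspace[OF fF])
    fix I assume I: "two_sided_ideal n r I \<and> Gset q n \<subseteq> I"
    have "ideal_ctx n r q I"
      by unfold_locales (use I q in auto)
    then show "trunc N f \<in> I" using ideal_ctx.trunc_in[OF _ fF fk] by blast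
  qed
  show "f \<in> Fclosure n r (ideal_gen n r (Gset q n))"
    unfolding Fclosure_def
  proof (intro CollectI conjI allI impI)
    show "f \<in> Fspace n r" by (rule fF)
    fix \<rho> :: real and \<epsilon> :: real assume rho: "0 < \<rho> \<and> ereal \<rho> < r" and e: "\<epsilon> > 0"
    obtain N where "normF_bullet n (\<lambda>w. f w - trunc N f w) \<rho> < \<epsilon>"
      using tail_small[OF fF _ _ e] rho by blast
    then show "\<exists>g\<in>ideal_gen n r (Gset q n). normF_bullet n (\<lambda>w. f w - g w) \<rho> < \<epsilon>"
      using ig by blast
  qed
qed

theorem theorem7p10:
  fixes q :: complex and n :: nat and r :: ereal
  assumes "q \<noteq> 0" and "0 < r"
  shows "\<exists>\<pi>. (\<forall>f\<in>Fspace n r. \<pi> f \<in> Oq n q r)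
     \<and> lin_on (Fspace n r) \<pi>
     \<and> (\<forall>f\<in>Fspace n r. \<forall>g\<in>Fspace n r. \<pi> (Fmult f g) = Oqmult n q (\<pi> f) (\<pi> g))
     \<and> \<pi> Fone = Oone
     \<and> cont_FO n q r \<pi>
     \<and> \<pi> ` Fspace n r = Oq n q r
     \<and> (\<forall>i\<in>{1..n}. \<pi> (zeta i) = xgen i)
     \<and> {f \<in> Fspace n r. \<pi> f = (\<lambda>_. 0)}
          = Fclosure n r (ideal_gen n r {qcomm q i j | i j. 1 \<le> i \<and> i < j \<and> j \<le> n})
     \<and> (\<exists>P. (\<forall>f\<in>Fspace n r. P f \<in> Fspace n r) \<and> lin_on (Fspace n r) P \<and> cont_FF n r P
           \<and> (\<forall>f\<in>Fspace n r. P (P f) = P f)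
           \<and> P ` Fspace n r = {f \<in> Fspace n r. \<pi> f = (\<lambda>_. 0)})
     \<and> (\<forall>\<rho>. 0 < \<rho> \<and> ereal \<rho> < r \<longrightarrow>
          (\<forall>a\<in>Oq n q r. normB n q a \<rho> = Inf {normF_circ n f \<rho> | f. f \<in> Fspace n r \<and> \<pi> f = a}))"
proof -
  note q = assms(1)
  let ?\<pi> = "piF n q"
  define P where "P f = (\<lambda>\<alpha>. f \<alpha> - sec n q (piF n q f) \<alpha>)" for f
  have c1: "\<forall>f\<in>Fspace n r. ?\<pi> f \<in> Oq n q r" using piF_Oq[OF q] by blast
  have c2: "lin_on (Fspace n r) ?\<pi>" unfolding lin_on_def by (simp add: piF_add piF_smult)
  have c3: "\<forall>f\<in>Fspace n r. \<forall>g\<in>Fspace n r. ?\<pi> (Fmult f g) = Oqmult n q (?\<pi> f) (?\<pi> g)"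
    using piF_mult by blast
  have c4: "?\<pi> Fone = Oone"
  proof
    fix k
    have "pvec [] = k \<longleftrightarrow> k = (\<lambda>_. 0)" by (auto simp: pvec_def)
    then show "?\<pi> Fone k = Oone k" by (simp add: Fone_wd piF_wd Oone_def wt_def)
  qed
  have c5: "cont_FO n q r ?\<pi>"
    unfolding cont_FO_def
  proof (intro allI impI)
    fix \<rho> :: real assume rho: "0 < \<rho> \<and> ereal \<rho> < r"
    then obtain \<rho>' B where B: "0 < \<rho>'" "ereal \<rho>' < r" "B \<ge> 0"
      "\<And>f. f \<in> Fspace n r \<Longrightarrow> normF_circ n f \<rho> \<le> B * normF_bullet n f \<rho>'"
      using circ_le_bullet[of \<rho> r n] by blast
    have "\<forall>f\<in>Fspace n r. normB n q (?\<pi> f) \<rho> \<le> B * normF_bullet n f \<rho>'"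
      using normB_le_circ[OF q] B(4) rho by (meson order.trans)
    then show "\<exists>\<rho>' C. 0 < \<rho>' \<and> ereal \<rho>' < r \<and> (\<forall>f\<in>Fspace n r. normB n q (?\<pi> f) \<rho> \<le> C * normF_bullet n f \<rho>')"
      using B by blast
  qed
  have c6: "?\<pi> ` Fspace n r = Oq n q r"
  proof
    show "?\<pi> ` Fspace n r \<subseteq> Oq n q r" using c1 by blast
    show "Oq n q r \<subseteq> ?\<pi> ` Fspace n r"
    proof
      fix a assume a: "a \<in> Oq n q r"
      have "a = ?\<pi> (sec n q a)" using piF_sec[OF q, of n a] Oq_zero[OF a] by simp
      then show "a \<in> ?\<pi> ` Fspace n r" using sec_Fspace[OF q a] by blast
    qed
  qed
  have c7: "\<forall>i\<in>{1..n}. ?\<pi> (zeta i) = xgen i"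
  proof
    fix i assume i: "i \<in> {1..n}"
    show "?\<pi> (zeta i) = xgen i"
    proof
      fix k
      have "pvec [i] = k \<longleftrightarrow> k = (\<lambda>j. if j = i then 1 else 0)" by (auto simp: pvec_def)
      then show "?\<pi> (zeta i) k = xgen i k" using i by (simp add: zeta_wd piF_wd xgen_def wt_def)
    qed
  qed
  have c8: "{f \<in> Fspace n r. ?\<pi> f = (\<lambda>_. 0)} = Fclosure n r (ideal_gen n r {qcomm q i j | i j. 1 \<le> i \<and> i < j \<and> j \<le> n})"
    using ker_closure[OF q] closure_ker[OF q assms(2)] by (rule subset_antisym)
  have Pker: "?\<pi> (P f) = (\<lambda>_. 0)" if f: "f \<in> Fspace n r" for f
  proof -
    have "?\<pi> (P f) = (\<lambda>k. ?\<pi> f k - 1 * ?\<pi> (sec n q (?\<pi> f)) k)"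
      unfolding P_def using piF_diff[of n q f 1 "sec n q (?\<pi> f)"] by simp
    also have "?\<pi> (sec n q (?\<pi> f)) = ?\<pi> f" using piF_sec[OF q] Oq_zero[OF c1[rule_format, OF f]] by blast
    finally show ?thesis by simp
  qed
  have PF: "P f \<in> Fspace n r" if f: "f \<in> Fspace n r" for f
    unfolding P_def by (rule Fspace_diff[OF f sec_Fspace[OF q c1[rule_format, OF f]]])
  have c9: "\<exists>P. (\<forall>f\<in>Fspace n r. P f \<in> Fspace n r) \<and> lin_on (Fspace n r) P \<and> cont_FF n r P
           \<and> (\<forall>f\<in>Fspace n r. P (P f) = P f)
           \<and> P ` Fspace n r = {f \<in> Fspace n r. ?\<pi> f = (\<lambda>_. 0)}"
  proof (intro exI[of _ P] conjI)
    show "\<forall>f\<in>Fspace n r. P f \<in> Fspace n r" using PF by blast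
    show "lin_on (Fspace n r) P"
      unfolding lin_on_def P_def
      by (auto simp: piF_add piF_smult sec_add sec_smult algebra_simps)
    show "\<forall>f\<in>Fspace n r. P (P f) = P f"
    proof
      fix f assume f: "f \<in> Fspace n r"
      show "P (P f) = P f" unfolding P_def[of "P f"] Pker[OF f] sec_zero by simp
    qed
    show "P ` Fspace n r = {f \<in> Fspace n r. ?\<pi> f = (\<lambda>_. 0)}"
    proof
      show "P ` Fspace n r \<subseteq> {f \<in> Fspace n r. ?\<pi> f = (\<lambda>_. 0)}" using PF Pker by blast
      show "{f \<in> Fspace n r. ?\<pi> f = (\<lambda>_. 0)} \<subseteq> P ` Fspace n r"
      proof
        fix f assume f: "f \<in> {f \<in> Fspace n r. ?\<pi> f = (\<lambda>_. 0)}"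
        then have "P f = f" by (simp add: P_def sec_zero)
        then show "f \<in> P ` Fspace n r" using f by force
      qed
    qed
    show "cont_FF n r P"
      unfolding cont_FF_def
    proof (intro allI impI)
      fix \<rho> :: real assume rho: "0 < \<rho> \<and> ereal \<rho> < r"
      then obtain \<rho>' B where B: "0 < \<rho>'" "ereal \<rho>' < r" "B \<ge> 0"
        "\<And>f. f \<in> Fspace n r \<Longrightarrow> normF_circ n f \<rho> \<le> B * normF_bullet n f \<rho>'" and lt: "\<rho> < \<rho>'"
        using circ_le_bullet[of \<rho> r n] by blast
      have le: "\<rho> \<le> \<rho>'" using lt by simp
      have "normF_bullet n (P f) \<rho> \<le> (1 + B) * normF_bullet n f \<rho>'" if f: "f \<in> Fspace n r" for f
      proof -
        have s: "sec n q (?\<pi> f) \<in> Fspace n r" by (rule sec_Fspace[OF q c1[rule_format, OF f]])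
        have "normF_bullet n (P f) \<rho> \<le> normF_bullet n f \<rho> + normF_bullet n (sec n q (?\<pi> f)) \<rho>"
          unfolding P_def using bullet_diff[OF f s] rho by blast
        also have "normF_bullet n (sec n q (?\<pi> f)) \<rho> \<le> normF_circ n (sec n q (?\<pi> f)) \<rho>"
          using bullet_le_circ[OF s] rho by blast
        also have "\<dots> = normB n q (?\<pi> f) \<rho>" by (rule circ_sec[OF q])
        also have "\<dots> \<le> normF_circ n f \<rho>" using normB_le_circ[OF q f] rho by blast
        also have "\<dots> \<le> B * normF_bullet n f \<rho>'" using B(4)[OF f] .
        also have "normF_bullet n f \<rho> \<le> normF_bullet n f \<rho>'"
          using bullet_mono[OF f _ le B(2)] rho by blast
        finally show ?thesis by (simp add: algebra_simps)
      qed
      then show "\<exists>\<rho>' C. 0 < \<rho>' \<and> ereal \<rho>' < r \<and> (\<forall>f\<in>Fspace n r. normF_bullet n (P f) \<rho> \<le> C * normF_bullet n f \<rho>')"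
        using B by blast
    qed
  qed
  have c10: "\<forall>\<rho>. 0 < \<rho> \<and> ereal \<rho> < r \<longrightarrow>
          (\<forall>a\<in>Oq n q r. normB n q a \<rho> = Inf {normF_circ n f \<rho> | f. f \<in> Fspace n r \<and> ?\<pi> f = a})"
  proof (intro allI impI ballI)
    fix \<rho> :: real and a assume rho: "0 < \<rho> \<and> ereal \<rho> < r" and a: "a \<in> Oq n q r"
    show "normB n q a \<rho> = Inf {normF_circ n f \<rho> | f. f \<in> Fspace n r \<and> ?\<pi> f = a}"
    proof (rule cInf_eq_minimum[symmetric])
      have "?\<pi> (sec n q a) = a" using piF_sec[OF q, of n a] Oq_zero[OF a] by simp
      then show "normB n q a \<rho> \<in> {normF_circ n f \<rho> | f. f \<in> Fspace n r \<and> ?\<pi> f = a}"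
        using sec_Fspace[OF q a] circ_sec[OF q, of n a \<rho>] by force
      fix x assume "x \<in> {normF_circ n f \<rho> | f. f \<in> Fspace n r \<and> ?\<pi> f = a}"
      then obtain f where f: "f \<in> Fspace n r" "?\<pi> f = a" "x = normF_circ n f \<rho>" by blast
      show "normB n q a \<rho> \<le> x" using normB_le_circ[OF q f(1)] rho f by blast
    qed
  qed
  show ?thesis using c1 c2 c3 c4 c5 c6 c7 c8 c9 c10 by blast
qed

end
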